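(* Let $\nu, \delta$ be positive real numbers with $\nu \geq 1$, and let $s \geq 4$ be an even number. Suppose $A$ is a finite, non-empty set of real numbers with $E_s(A) \geq |A|^{2s - \nu}$. Then either \[ E_{s/2}(A) > |A|^{s - \nu + \delta}, \] or there exists $A' \subseteq A$ such that $|A'| \gg |A|^{1 - 82\delta}$ and, for each $m, n \in \mathbb{N} \cup \{0\}$, \[ |mA' - nA'| \ll_{m,n} |A|^{\nu + 240(m+n)\delta}. \]
   Context: For a finite set $X$ of reals and $t \in \mathbb{N}$, $E_t(X) = |\{(x_1,\dots,x_{2t}) \in X^{2t} : x_1 + \dots + x_t = x_{t+1} + \dots + x_{2t}\}|$. For $m, n \geq 0$, $mX - nX = \{x_1 + \dots + x_m - y_1 - \dots - y_n : x_i, y_j \in X\}$. The implied constant in $|A'| \gg |A|^{1-82\delta}$ is absolute; $X \ll_{m,n} Y$ means $|X| \leq C_{m,n}|Y|$ with $C_{m,n} > 0$ depending only on $m,n$. *)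

theory Defs
  imports Complex_Main "HOL-Library.FuncSet"
begin

definition energy :: "nat \<Rightarrow> real set \<Rightarrow> nat" where
  "energy t X = card {f \<in> {0..<2*t} \<rightarrow>\<^sub>E X.
      (\<Sum>i<t. f i) = (\<Sum>i<t. f (t + i))}"

definition sumdiff :: "nat \<Rightarrow> nat \<Rightarrow> real set \<Rightarrow> real set" where
  "sumdiff m n X = {(\<Sum>i<m. x i) - (\<Sum>j<n. y j) | x y.
      (\<forall>i<m. x i \<in> X) \<and> (\<forall>j<n. y j \<in> X)}"

end

theory Submission
  imports Defs "HOL-Library.Set_Algebras"
begin



lemma card_plus_sing_real: "card ((A::real set) + {c}) = card A"
  by (rule card_plus_sing)

lemma ruzsa_triangle:
  fixes X U V :: "real set"
  assumes fX: "finite X" and fU: "finite U" and fV: "finite V"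
  shows "card X * card (U + uminus ` V) \<le> card (X + uminus ` U) * card (X + uminus ` V)"
proof -
  define D where "D = U + uminus ` V"
  have "\<forall>d\<in>D. \<exists>p. fst p \<in> U \<and> snd p \<in> V \<and> d = fst p - snd p"
    unfolding D_def by (auto elim!: set_plus_elim)
  then obtain g where g: "\<And>d. d \<in> D \<Longrightarrow> fst (g d) \<in> U \<and> snd (g d) \<in> V \<and> d = fst (g d) - snd (g d)"
    by metis
  define h where "h = (\<lambda>(x,d). (x - fst (g d), x - snd (g d)))"
  have inj: "inj_on h (X \<times> D)"
  proof (rule inj_onI, clarsimp)
    fix x d x' d'
    assume "x \<in> X" "d \<in> D" "x' \<in> X" "d' \<in> D" "h (x, d) = h (x', d')"
    then have e1: "x - fst (g d) = x' - fst (g d')" and e2: "x - snd (g d) = x' - snd (g d')"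
      by (auto simp: h_def)
    have "d = d'" using g[OF \<open>d \<in> D\<close>] g[OF \<open>d' \<in> D\<close>] e1 e2 by linarith
    then show "x = x' \<and> d = d'" using e1 by simp
  qed
  have mem: "x - fst (g d) \<in> X + uminus ` U \<and> x - snd (g d) \<in> X + uminus ` V"
    if "x \<in> X" "d \<in> D" for x d
  proof -
    have "x + - fst (g d) \<in> X + uminus ` U"
      using g[OF \<open>d \<in> D\<close>] \<open>x \<in> X\<close> by (intro set_plus_intro imageI) auto
    moreover have "x + - snd (g d) \<in> X + uminus ` V"
      using g[OF \<open>d \<in> D\<close>] \<open>x \<in> X\<close> by (intro set_plus_intro imageI) auto
    ultimately show ?thesis by simp
  qed
  have sub: "h ` (X \<times> D) \<subseteq> (X + uminus ` U) \<times> (X + uminus ` V)"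
    using mem by (auto simp: h_def)
  have "card (X \<times> D) \<le> card ((X + uminus ` U) \<times> (X + uminus ` V))"
    by (rule card_inj_on_le[OF inj sub]) (simp add: finite_set_plus fX fU fV)
  then show ?thesis by (simp add: D_def card_cartesian_product)
qed

lemma petridis:
  fixes X B :: "real set"
  assumes fX: "finite X" and fB: "finite B" and Xne: "X \<noteq> {}"
  and minim: "\<And>Z. Z \<subseteq> X \<Longrightarrow> real (card (X + B)) * card Z \<le> real (card (Z + B)) * card X"
  and fC: "finite C"
  shows "real (card (X + B + C)) * card X \<le> real (card (X + B)) * card (X + C)"
  using fC
proof (induction C rule: finite_induct)
  case empty
  then show ?case by simp
next
  case (insert c C)
  define L where "L = real (card (X + B)) / card X"
  have cX: "card X > 0" using fX Xne by (simp add: card_gt_0_iff)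
  have minL: "L * card Z \<le> card (Z + B)" if "Z \<subseteq> X" for Z
    using minim[OF that] cX by (simp add: L_def field_simps)
  have IH: "card (X + B + C) \<le> L * card (X + C)"
    using insert.IH cX by (simp add: L_def field_simps)
  define Z where "Z = {x \<in> X. {x} + B + {c} \<subseteq> X + B + C}"
  have ZX: "Z \<subseteq> X" by (auto simp: Z_def)
  have fZ: "finite Z" using fX ZX finite_subset by blast
  have ZBc: "Z + B + {c} \<subseteq> X + B + {c}" by (intro set_plus_mono2 ZX order_refl)
  have ZB: "Z + B \<subseteq> X + B" by (intro set_plus_mono2 ZX order_refl)
  have fin1: "finite (X + B + C)" "finite (X + C)" "finite (X + B)"
    using fX fB insert.hyps by (simp_all add: finite_set_plus)
  have eq1: "X + B + insert c C = (X + B + C) \<union> (X + B + {c})"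
    by (metis insert_is_Un set_plus_Un sup_commute)
  have sub1: "X + B + {c} - (X + B + C) \<subseteq> (X + B + {c}) - (Z + B + {c})"
  proof -
    have "Z + B + {c} \<subseteq> X + B + C"
    proof
      fix y assume "y \<in> Z + B + {c}"
      then obtain z b where "z \<in> Z" "b \<in> B" "y = z + b + c"
        by (auto elim!: set_plus_elim)
      then have "{z} + B + {c} \<subseteq> X + B + C" by (auto simp: Z_def)
      moreover have "y \<in> {z} + B + {c}" using \<open>b \<in> B\<close> \<open>y = z + b + c\<close> by auto
      ultimately show "y \<in> X + B + C" by blast
    qed
    then show ?thesis by blast
  qed
  have "card (Z + B + {c}) \<le> card (X + B + {c})"
    by (rule card_mono) (simp_all add: finite_set_plus fX fB ZBc)
  have c1: "card (X + B + {c} - (X + B + C)) \<le> card (X + B) - card (Z + B)"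
  proof -
    have "card (X + B + {c} - (X + B + C)) \<le> card ((X + B + {c}) - (Z + B + {c}))"
      by (rule card_mono[OF _ sub1]) (simp add: finite_set_plus fX fB)
    also have "\<dots> = card (X + B + {c}) - card (Z + B + {c})"
      by (rule card_Diff_subset) (simp_all add: finite_set_plus fZ fB ZBc)
    also have "\<dots> = card (X + B) - card (Z + B)"
      by (simp add: card_plus_sing)
    finally show ?thesis .
  qed
  have ZBle: "card (Z + B) \<le> card (X + B)"
    by (rule card_mono) (simp_all add: finite_set_plus fX fB ZB)
  have "card (X + B + insert c C) \<le> card (X + B + C) + card (X + B + {c} - (X + B + C))"
    unfolding eq1 by (metis Un_Diff_cancel card_Un_le)
  then have A1: "real (card (X + B + insert c C)) \<le> card (X + B + C) + (real (card (X + B)) - card (Z + B))"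
    using c1 ZBle by linarith
  have A2: "real (card (X + B)) = L * card X" using cX by (simp add: L_def)
  have A3: "L * card Z \<le> card (Z + B)" using minL[OF ZX] .
  have disj: "((\<lambda>x. x + c) ` (X - Z)) \<inter> (X + C) = {}"
  proof (rule ccontr)
    assume "\<not> ?thesis"
    then obtain x where x: "x \<in> X" "x \<notin> Z" "x + c \<in> X + C" by blast
    then obtain x' c' where x': "x' \<in> X" "c' \<in> C" "x + c = x' + c'" by (auto elim!: set_plus_elim)
    have "{x} + B + {c} \<subseteq> X + B + C"
    proof
      fix y assume "y \<in> {x} + B + {c}"
      then obtain b where "b \<in> B" "y = x + b + c" by (auto elim!: set_plus_elim)
      then have "y = x' + b + c'" using x' by simp
      then show "y \<in> X + B + C" using x' \<open>b \<in> B\<close> by auto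
    qed
    then show False using x by (auto simp: Z_def)
  qed
  have Xc: "X + {c} = (\<lambda>x. x + c) ` X" unfolding set_plus_def by auto
  have "X + insert c C = (X + C) \<union> ((\<lambda>x. x + c) ` X)"
    by (metis insert_is_Un set_plus_Un sup_commute Xc)
  then have "X + insert c C \<supseteq> (X + C) \<union> ((\<lambda>x. x + c) ` (X - Z))" by blast
  then have "card (X + insert c C) \<ge> card ((X + C) \<union> ((\<lambda>x. x + c) ` (X - Z)))"
    by (intro card_mono) (auto simp: finite_set_plus fX insert.hyps)
  also have "card ((X + C) \<union> ((\<lambda>x. x + c) ` (X - Z))) = card (X + C) + card (X - Z)"
    using disj fin1 fX by (subst card_Un_disjoint) (auto simp: card_image inj_on_def)
  also have "card (X - Z) = card X - card Z" using fZ ZX by (simp add: card_Diff_subset)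
  finally have A4: "real (card (X + insert c C)) \<ge> card (X + C) + (real (card X) - card Z)"
    using card_mono[OF fX ZX] by linarith
  have L0: "L \<ge> 0" by (simp add: L_def)
  have "real (card (X + B + insert c C)) \<le> L * (card (X + C) + (real (card X) - card Z))"
    using A1 A2 A3 IH by (simp add: algebra_simps)
  also have "\<dots> \<le> L * card (X + insert c C)"
    using A4 L0 by (simp add: mult_left_mono)
  finally show ?case using cX by (simp add: L_def field_simps)
qed


fun ms :: "nat \<Rightarrow> real set \<Rightarrow> real set" where
  "ms 0 X = {0}"
| "ms (Suc m) X = X + ms m X"

lemma ms_finite: "finite X \<Longrightarrow> finite (ms m X)"
  by (induction m) (auto simp: finite_set_plus)

lemma ms_char: "ms m X = {(\<Sum>i<m. x i) | x. \<forall>i<m. x i \<in> X}"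
proof (induction m)
  case 0
  then show ?case by auto
next
  case (Suc m)
  show ?case
  proof (intro set_eqI iffI)
    fix z assume "z \<in> ms (Suc m) X"
    then obtain a w where a: "a \<in> X" "w \<in> ms m X" "z = a + w" by (auto elim!: set_plus_elim)
    then obtain x where x: "\<forall>i<m. x i \<in> X" "w = (\<Sum>i<m. x i)" using Suc by auto
    define x' where "x' = x(m := a)"
    have "(\<Sum>i<m. x' i) = (\<Sum>i<m. x i)" by (intro sum.cong) (auto simp: x'_def)
    then have "z = (\<Sum>i<Suc m. x' i)" using a x by (simp add: x'_def)
    moreover have "\<forall>i<Suc m. x' i \<in> X" using x a by (auto simp: x'_def less_Suc_eq)
    ultimately show "z \<in> {(\<Sum>i<Suc m. x i) | x. \<forall>i<Suc m. x i \<in> X}" by blast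
  next
    fix z assume "z \<in> {(\<Sum>i<Suc m. x i) | x. \<forall>i<Suc m. x i \<in> X}"
    then obtain x where x: "\<forall>i<Suc m. x i \<in> X" "z = (\<Sum>i<Suc m. x i)" by blast
    have "(\<Sum>i<m. x i) \<in> ms m X" using Suc x by auto
    moreover have "x m \<in> X" using x by auto
    ultimately have "x m + (\<Sum>i<m. x i) \<in> ms (Suc m) X" by auto
    then show "z \<in> ms (Suc m) X" using x by (simp add: add.commute)
  qed
qed

lemma uminus_set_plus: "uminus ` (X + Y) = uminus ` X + uminus ` (Y::real set)"
proof (intro set_eqI iffI)
  fix z assume "z \<in> uminus ` (X + Y)"
  then obtain w where w: "w \<in> X + Y" "z = - w" by auto
  then obtain a b where ab: "a \<in> X" "b \<in> Y" "w = a + b" by (auto elim: set_plus_elim)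
  have "- a + - b \<in> uminus ` X + uminus ` Y" using ab by (intro set_plus_intro imageI)
  then show "z \<in> uminus ` X + uminus ` Y" using w ab by simp
next
  fix z assume "z \<in> uminus ` X + uminus ` Y"
  then obtain a b where ab: "z = a + b" "a \<in> uminus ` X" "b \<in> uminus ` Y" by (rule set_plus_elim)
  then obtain a' b' where "a' \<in> X" "b' \<in> Y" "a = - a'" "b = - b'" by auto
  then have "a' + b' \<in> X + Y" "z = - (a' + b')" using ab by auto
  then show "z \<in> uminus ` (X + Y)" by (intro image_eqI[where x="a' + b'"]) auto
qed

lemma ms_uminus: "uminus ` ms m X = ms m (uminus ` X)"
  by (induction m) (simp_all add: uminus_set_plus)

lemma sumdiff_ms: "sumdiff m n X = ms m X + uminus ` ms n X"
proof (intro set_eqI iffI)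
  fix z assume "z \<in> sumdiff m n X"
  then obtain x y where "z = (\<Sum>i<m. x i) - (\<Sum>j<n. y j)" "\<forall>i<m. x i \<in> X" "\<forall>j<n. y j \<in> X"
    by (auto simp: sumdiff_def)
  moreover have "(\<Sum>i<m. x i) \<in> ms m X" "(\<Sum>j<n. y j) \<in> ms n X"
    using calculation by (auto simp: ms_char)
  ultimately have "(\<Sum>i<m. x i) + - (\<Sum>j<n. y j) \<in> ms m X + uminus ` ms n X"
    by (intro set_plus_intro imageI) auto
  then show "z \<in> ms m X + uminus ` ms n X" using \<open>z = _\<close> by simp
next
  fix z assume "z \<in> ms m X + uminus ` ms n X"
  then obtain a b where "z = a + - b" "a \<in> ms m X" "b \<in> ms n X" by (auto elim!: set_plus_elim)
  then show "z \<in> sumdiff m n X" by (auto simp: ms_char sumdiff_def)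
qed

lemma plunnecke:
  fixes Q :: "real set" and L :: real
  assumes fQ: "finite Q" and Qne: "Q \<noteq> {}"
  and hyp: "real (card (Q + uminus ` Q)) \<le> L * card Q"
  shows "real (card (sumdiff m n Q)) \<le> L ^ (m + n) * card Q"
proof -
  define B where "B = uminus ` Q"
  have fB: "finite B" using fQ by (simp add: B_def)
  define F where "F = {Z. Z \<subseteq> Q \<and> Z \<noteq> {}}"
  define f where "f = (\<lambda>Z. real (card (Z + B)) / card Z)"
  have fF: "finite F" using fQ by (simp add: F_def)
  have QF: "Q \<in> F" using Qne by (simp add: F_def)
  obtain X where XF: "X \<in> F" and Xmin: "\<And>Z. Z \<in> F \<Longrightarrow> f X \<le> f Z"
  proof -
    have "Min (f ` F) \<in> f ` F" using fF QF by (intro Min_in) auto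
    then obtain X where "X \<in> F" "f X = Min (f ` F)" by auto
    moreover have "\<And>Z. Z \<in> F \<Longrightarrow> Min (f ` F) \<le> f Z" using fF by auto
    ultimately show ?thesis using that by metis
  qed
  have XQ: "X \<subseteq> Q" and Xne: "X \<noteq> {}" using XF by (auto simp: F_def)
  have fX: "finite X" using XQ fQ finite_subset by blast
  have cX: "card X > 0" using fX Xne by (simp add: card_gt_0_iff)
  define L' where "L' = f X"
  have L'0: "L' \<ge> 0" by (simp add: L'_def f_def)
  have L'L: "L' \<le> L"
  proof -
    have "L' \<le> f Q" using Xmin[OF QF] by (simp add: L'_def)
    also have "f Q \<le> L" using hyp Qne fQ by (simp add: f_def B_def divide_le_eq card_gt_0_iff)
    finally show ?thesis .
  qed
  have minim: "real (card (X + B)) * card Z \<le> real (card (Z + B)) * card X" if "Z \<subseteq> X" for Z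
  proof (cases "Z = {}")
    case True
    then show ?thesis by simp
  next
    case False
    have fZ: "finite Z" using that fX finite_subset by blast
    have "Z \<in> F" using False that XQ by (auto simp: F_def)
    then have "f X \<le> f Z" by (rule Xmin)
    then show ?thesis using False fZ cX by (simp add: f_def field_simps card_gt_0_iff)
  qed
  have XB: "real (card (X + B)) = L' * card X" using cX by (simp add: L'_def f_def)
  have iter: "real (card (X + ms h B)) \<le> L' ^ h * card X" for h
  proof (induction h)
    case 0
    then show ?case by simp
  next
    case (Suc h)
    have "real (card (X + B + ms h B)) * card X \<le> real (card (X + B)) * card (X + ms h B)"
      by (rule petridis[OF fX fB Xne minim]) (auto intro: ms_finite fB)
    then have "real (card (X + B + ms h B)) \<le> L' * card (X + ms h B)"
      using cX XB by (simp add: field_simps)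
    also have "\<dots> \<le> L' * (L' ^ h * card X)" using Suc L'0 by (simp add: mult_left_mono)
    finally show ?case by (simp add: add.assoc)
  qed
  have "card X * card (ms m Q + uminus ` ms n Q) \<le> card (X + uminus ` ms m Q) * card (X + uminus ` ms n Q)"
    by (rule ruzsa_triangle[OF fX ms_finite ms_finite]) (use fQ in auto)
  then have "real (card X) * card (sumdiff m n Q) \<le> real (card (X + ms m B)) * card (X + ms n B)"
    by (simp add: sumdiff_ms ms_uminus B_def flip: of_nat_mult)
  also have "\<dots> \<le> (L' ^ m * card X) * (L' ^ n * card X)"
    by (intro mult_mono iter) (auto simp: L'0)
  finally have "real (card X) * card (sumdiff m n Q) \<le> real (card X) * (L' ^ (m + n) * card X)"
    by (simp add: power_add algebra_simps)
  then have "real (card (sumdiff m n Q)) \<le> L' ^ (m + n) * card X"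
    using cX by simp
  also have "\<dots> \<le> L ^ (m + n) * card Q"
    using L'0 L'L by (intro mult_mono power_mono) (auto simp: card_mono fQ XQ)
  finally show ?thesis .
qed




lemma cs_sum:
  fixes f :: "'a \<Rightarrow> real"
  assumes "finite A"
  shows "(\<Sum>x\<in>A. f x)^2 \<le> card A * (\<Sum>x\<in>A. (f x)^2)"
proof -
  have "0 \<le> (\<Sum>x\<in>A. \<Sum>y\<in>A. (f x - f y)^2)" by (intro sum_nonneg) auto
  also have "\<dots> = (\<Sum>x\<in>A. \<Sum>y\<in>A. ((f x)^2 + (f y)^2 - 2 * (f x * f y)))"
    by (intro sum.cong refl) (simp add: power2_diff)
  also have "\<dots> = (\<Sum>x\<in>A. card A * (f x)^2 + (\<Sum>y\<in>A. (f y)^2) - 2 * (f x * (\<Sum>y\<in>A. f y)))"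
    by (intro sum.cong refl) (simp add: sum_subtractf sum.distrib sum_distrib_left)
  also have "\<dots> = 2 * (card A * (\<Sum>x\<in>A. (f x)^2)) - 2 * (\<Sum>x\<in>A. f x)^2"
  proof -
    have e1: "(\<Sum>x\<in>A. 2 * (f x * (\<Sum>y\<in>A. f y))) = 2 * (\<Sum>x\<in>A. f x)^2"
    proof -
      have "(\<Sum>x\<in>A. 2 * (f x * sum f A)) = 2 * (\<Sum>x\<in>A. f x * sum f A)" by (rule sum_distrib_left[symmetric])
      also have "\<dots> = 2 * (sum f A * sum f A)" by (simp only: sum_distrib_right[symmetric])
      finally show ?thesis by (simp add: power2_eq_square)
    qed
    have "(\<Sum>x\<in>A. card A * (f x)^2 + (\<Sum>y\<in>A. (f y)^2) - 2 * (f x * (\<Sum>y\<in>A. f y)))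
      = (\<Sum>x\<in>A. card A * (f x)^2) + (\<Sum>x\<in>A. (\<Sum>y\<in>A. (f y)^2)) - (\<Sum>x\<in>A. 2 * (f x * (\<Sum>y\<in>A. f y)))"
      by (simp only: sum_subtractf sum.distrib)
    also have "\<dots> = 2 * (card A * (\<Sum>x\<in>A. (f x)^2)) - 2 * (\<Sum>x\<in>A. f x)^2"
      unfolding e1 by (simp add: sum_distrib_left[symmetric])
    finally show ?thesis .
  qed
  finally show ?thesis by simp
qed


lemma bsg:
  fixes Q Y :: "real set" and \<kappa> :: real
  assumes fQ: "finite Q" and Qne: "Q \<noteq> {}" and fY: "finite Y" and k1: "\<kappa> \<ge> 1"
  and hyp: "(\<Sum>y\<in>Y. (real (card {x\<in>Q. y - x \<in> Q}))^2) \<ge> real (card Q)^3 / \<kappa>"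
  shows "\<exists>Q''\<subseteq>Q. Q'' \<noteq> {} \<and> real (card Q)^2 \<le> 32 * \<kappa>^2 * real (card Q'')^2
     \<and> real (card (Q'' + uminus ` Q'')) \<le> 2^21 * \<kappa>^10 * card Q''"
proof -
  define q where "q = real (card Q)"
  have q0: "q > 0" using fQ Qne by (simp add: q_def card_gt_0_iff)
  have k0: "\<kappa> > 0" using k1 by simp
  define \<rho> where "\<rho> y = real (card {x\<in>Q. y - x \<in> Q})" for y
  have \<rho>0: "\<rho> y \<ge> 0" for y by (simp add: \<rho>_def)
  have \<rho>le: "\<rho> y \<le> q" for y unfolding \<rho>_def q_def by (intro of_nat_mono card_mono fQ) auto
  have B1: "(\<Sum>y\<in>Y. \<rho> y) \<le> q^2"
  proof -
    have "(\<Sum>y\<in>Y. card {x\<in>Q. y - x \<in> Q}) = card (Sigma Y (\<lambda>y. {x\<in>Q. y - x \<in> Q}))"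
      using fY fQ by (subst card_SigmaI) auto
    also have "\<dots> \<le> card (Q \<times> Q)"
    proof (rule card_inj_on_le[where f="\<lambda>(y,x). (x, y - x)"])
      show "inj_on (\<lambda>(y, x). (x, y - x)) (Sigma Y (\<lambda>y. {x \<in> Q. y - x \<in> Q}))"
        by (auto simp: inj_on_def)
      show "(\<lambda>(y, x). (x, y - x)) ` (Sigma Y (\<lambda>y. {x \<in> Q. y - x \<in> Q})) \<subseteq> Q \<times> Q" by auto
      show "finite (Q \<times> Q)" using fQ by simp
    qed
    finally have "real (\<Sum>y\<in>Y. card {x\<in>Q. y - x \<in> Q}) \<le> real (card (Q \<times> Q))" by linarith
    then show ?thesis by (simp add: \<rho>_def q_def card_cartesian_product power2_eq_square)
  qed
  define P where "P = {y\<in>Y. \<rho> y \<ge> q / (2*\<kappa>)}"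
  have PY: "P \<subseteq> Y" by (auto simp: P_def)
  have fP: "finite P" using fY PY finite_subset by blast
  have B2: "(\<Sum>y\<in>P. \<rho> y) \<ge> q^2 / (2*\<kappa>)"
  proof -
    have split: "(\<Sum>y\<in>Y. (\<rho> y)^2) = (\<Sum>y\<in>Y - P. (\<rho> y)^2) + (\<Sum>y\<in>P. (\<rho> y)^2)"
      using PY fY by (rule sum.subset_diff)
    have "(\<Sum>y\<in>Y - P. (\<rho> y)^2) \<le> (\<Sum>y\<in>Y - P. (q/(2*\<kappa>)) * \<rho> y)"
    proof (rule sum_mono)
      fix y assume "y \<in> Y - P"
      then have "\<rho> y < q/(2*\<kappa>)" by (auto simp: P_def)
      then have "\<rho> y * \<rho> y \<le> (q/(2*\<kappa>)) * \<rho> y" using \<rho>0[of y]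
        by (intro mult_right_mono) auto
      then show "(\<rho> y)^2 \<le> (q/(2*\<kappa>)) * \<rho> y" by (simp only: power2_eq_square)
    qed
    also have "\<dots> = (q/(2*\<kappa>)) * (\<Sum>y\<in>Y - P. \<rho> y)" by (simp add: sum_distrib_left)
    also have "\<dots> \<le> (q/(2*\<kappa>)) * (\<Sum>y\<in>Y. \<rho> y)"
      using q0 k0 fY \<rho>0 by (intro mult_left_mono sum_mono2) auto
    also have "\<dots> \<le> (q/(2*\<kappa>)) * q^2" using B1 q0 k0 by (intro mult_left_mono) auto
    finally have s1: "(\<Sum>y\<in>Y - P. (\<rho> y)^2) \<le> q^3/(2*\<kappa>)" by (simp add: power2_eq_square power3_eq_cube)
    have s2: "(\<Sum>y\<in>P. (\<rho> y)^2) \<le> q * (\<Sum>y\<in>P. \<rho> y)"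
    proof -
      have "(\<Sum>y\<in>P. (\<rho> y)^2) \<le> (\<Sum>y\<in>P. q * \<rho> y)"
        using \<rho>le \<rho>0 by (intro sum_mono) (simp add: power2_eq_square mult_right_mono)
      then show ?thesis by (simp add: sum_distrib_left)
    qed
    have "q^3/\<kappa> \<le> q^3/(2*\<kappa>) + q * (\<Sum>y\<in>P. \<rho> y)"
      using hyp split s1 s2 by (simp add: \<rho>_def q_def)
    then have "q * (q^2/(2*\<kappa>)) \<le> q * (\<Sum>y\<in>P. \<rho> y)"
      using k0 by (simp add: field_simps power3_eq_cube power2_eq_square)
    then show ?thesis using q0 by (rule mult_left_le_imp_le)
  qed
  define nbr where "nbr a = {b\<in>Q. a + b \<in> P}" for a
  have nbrQ: "nbr a \<subseteq> Q" for a by (auto simp: nbr_def)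
  have fnbr: "finite (nbr a)" for a using fQ nbrQ finite_subset by blast
  define E where "E = {p\<in>Q \<times> Q. fst p + snd p \<in> P}"
  have degsum: "(\<Sum>a\<in>Q. real (card (nbr a))) = (\<Sum>y\<in>P. \<rho> y)"
  proof -
    have "(\<Sum>a\<in>Q. card (nbr a)) = card (Sigma Q nbr)" using fQ fnbr by (simp add: card_SigmaI)
    also have "Sigma Q nbr = E" by (auto simp: E_def nbr_def)
    finally have e1: "(\<Sum>a\<in>Q. card (nbr a)) = card E" .
    have "(\<Sum>y\<in>P. card {x\<in>Q. y - x \<in> Q}) = card (Sigma P (\<lambda>y. {x\<in>Q. y - x \<in> Q}))"
      using fP fQ by (simp add: card_SigmaI)
    also have "Sigma P (\<lambda>y. {x\<in>Q. y - x \<in> Q}) = (\<lambda>p. (fst p + snd p, fst p)) ` E"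
    proof
      show "Sigma P (\<lambda>y. {x\<in>Q. y - x \<in> Q}) \<subseteq> (\<lambda>p. (fst p + snd p, fst p)) ` E"
      proof
        fix z assume z: "z \<in> Sigma P (\<lambda>y. {x\<in>Q. y - x \<in> Q})"
        obtain y x where zyx: "z = (y, x)" by (cases z)
        have "(x, y - x) \<in> E" using z zyx by (simp add: E_def)
        moreover have "z = (\<lambda>p. (fst p + snd p, fst p)) (x, y - x)" using zyx by simp
        ultimately show "z \<in> (\<lambda>p. (fst p + snd p, fst p)) ` E" by blast
      qed
      show "(\<lambda>p. (fst p + snd p, fst p)) ` E \<subseteq> Sigma P (\<lambda>y. {x\<in>Q. y - x \<in> Q})"
      proof
        fix z assume "z \<in> (\<lambda>p. (fst p + snd p, fst p)) ` E"
        then obtain p where p: "p \<in> E" "z = (fst p + snd p, fst p)" by (rule imageE)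
        then have "fst p \<in> Q" "snd p \<in> Q" "fst p + snd p \<in> P" by (auto simp: E_def mem_Times_iff)
        then show "z \<in> Sigma P (\<lambda>y. {x\<in>Q. y - x \<in> Q})" using p by simp
      qed
    qed
    also have "card \<dots> = card E" by (rule card_image) (auto simp: inj_on_def)
    finally have e2: "(\<Sum>y\<in>P. card {x\<in>Q. y - x \<in> Q}) = card E" .
    have "(\<Sum>a\<in>Q. real (card (nbr a))) = real (\<Sum>a\<in>Q. card (nbr a))" by (rule of_nat_sum[symmetric])
    also have "\<dots> = real (\<Sum>y\<in>P. card {x\<in>Q. y - x \<in> Q})" using e1 e2 by simp
    also have "\<dots> = (\<Sum>y\<in>P. \<rho> y)" unfolding \<rho>_def by (rule of_nat_sum)
    finally show ?thesis .
  qed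
  define m where "m = q / (64 * \<kappa>^2)"
  have m0: "m > 0" using q0 k0 by (simp add: m_def)
  define codeg where "codeg a a' = real (card (nbr a \<inter> nbr a'))" for a a'
  define Bad where "Bad = {p\<in>Q \<times> Q. codeg (fst p) (snd p) < m}"
  have fBad: "finite Bad" using fQ by (simp add: Bad_def)
  define badc where "badc c = card (Bad \<inter> (nbr c \<times> nbr c))" for c
  have B3: "(\<Sum>c\<in>Q. real (badc c)) \<le> q^2 * m"
  proof -
    have "(\<Sum>c\<in>Q. badc c) = card (Sigma Q (\<lambda>c. Bad \<inter> (nbr c \<times> nbr c)))"
      using fQ fBad by (simp add: card_SigmaI badc_def)
    also have "\<dots> = card ((\<lambda>(c,p). (p,c)) ` Sigma Q (\<lambda>c. Bad \<inter> (nbr c \<times> nbr c)))"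
      by (rule card_image[symmetric]) (auto simp: inj_on_def)
    also have "(\<lambda>(c,p). (p,c)) ` Sigma Q (\<lambda>c. Bad \<inter> (nbr c \<times> nbr c))
       = Sigma Bad (\<lambda>p. nbr (fst p) \<inter> nbr (snd p))"
    proof
      show "(\<lambda>(c,p). (p,c)) ` Sigma Q (\<lambda>c. Bad \<inter> (nbr c \<times> nbr c))
         \<subseteq> Sigma Bad (\<lambda>p. nbr (fst p) \<inter> nbr (snd p))"
      proof
        fix z assume "z \<in> (\<lambda>(c,p). (p,c)) ` Sigma Q (\<lambda>c. Bad \<inter> (nbr c \<times> nbr c))"
        then obtain w where w: "w \<in> Sigma Q (\<lambda>c. Bad \<inter> (nbr c \<times> nbr c))" "z = (\<lambda>(c,p). (p,c)) w"
          by (rule imageE)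
        obtain c p where wcp: "w = (c, p)" by (cases w)
        have cp: "c \<in> Q" "p \<in> Bad" "p \<in> nbr c \<times> nbr c" "z = (p, c)" using w wcp by auto
        then have "fst p \<in> Q" "snd p \<in> Q" "c + fst p \<in> P" "c + snd p \<in> P"
          by (auto simp: nbr_def mem_Times_iff)
        then have "c \<in> nbr (fst p) \<inter> nbr (snd p)" using cp by (simp add: nbr_def add.commute)
        then show "z \<in> Sigma Bad (\<lambda>p. nbr (fst p) \<inter> nbr (snd p))" using cp by simp
      qed
      show "Sigma Bad (\<lambda>p. nbr (fst p) \<inter> nbr (snd p))
         \<subseteq> (\<lambda>(c,p). (p,c)) ` Sigma Q (\<lambda>c. Bad \<inter> (nbr c \<times> nbr c))"
      proof
        fix z assume "z \<in> Sigma Bad (\<lambda>p. nbr (fst p) \<inter> nbr (snd p))"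
        then obtain c p where cp: "p \<in> Bad" "c \<in> nbr (fst p) \<inter> nbr (snd p)" "z = (p, c)" by blast
        then have pQ: "fst p \<in> Q" "snd p \<in> Q" by (auto simp: Bad_def mem_Times_iff)
        have "c \<in> Q" "fst p + c \<in> P" "snd p + c \<in> P" using cp by (auto simp: nbr_def)
        then have "p \<in> nbr c \<times> nbr c" using pQ by (simp add: nbr_def mem_Times_iff add.commute)
        then have "(c, p) \<in> Sigma Q (\<lambda>c. Bad \<inter> (nbr c \<times> nbr c))" using cp \<open>c \<in> Q\<close> by simp
        moreover have "z = (\<lambda>(c,p). (p,c)) (c, p)" using cp by simp
        ultimately show "z \<in> (\<lambda>(c,p). (p,c)) ` Sigma Q (\<lambda>c. Bad \<inter> (nbr c \<times> nbr c))" by blast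
      qed
    qed
    also have "card \<dots> = (\<Sum>p\<in>Bad. card (nbr (fst p) \<inter> nbr (snd p)))"
      using fBad fnbr by (simp add: card_SigmaI)
    finally have "real (\<Sum>c\<in>Q. badc c) = (\<Sum>p\<in>Bad. codeg (fst p) (snd p))"
      by (simp add: codeg_def)
    also have "\<dots> \<le> (\<Sum>p\<in>Bad. m)" by (intro sum_mono) (auto simp: Bad_def)
    also have "\<dots> = card Bad * m" by simp
    also have "\<dots> \<le> card (Q \<times> Q) * m"
      using m0 fQ by (intro mult_right_mono of_nat_mono card_mono) (auto simp: Bad_def)
    also have "\<dots> = q^2 * m" by (simp add: q_def card_cartesian_product power2_eq_square)
    finally show ?thesis by simp
  qed
  define deg where "deg c = real (card (nbr c))" for c
  have degsq: "(\<Sum>c\<in>Q. (deg c)^2) \<ge> q^3 / (4 * \<kappa>^2)"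
  proof -
    have "(\<Sum>c\<in>Q. deg c)^2 \<le> q * (\<Sum>c\<in>Q. (deg c)^2)"
      using cs_sum[OF fQ, of deg] by (simp add: q_def)
    moreover have "(q^2/(2*\<kappa>))^2 \<le> (\<Sum>c\<in>Q. deg c)^2"
      using B2 degsum q0 k0 by (intro power_mono) (auto simp: deg_def)
    ultimately have "(q^2/(2*\<kappa>))^2 \<le> q * (\<Sum>c\<in>Q. (deg c)^2)" by linarith
    then have "q * (q^3 / (4 * \<kappa>^2)) \<le> q * (\<Sum>c\<in>Q. (deg c)^2)"
      using k0 by (simp add: field_simps power2_eq_square power3_eq_cube)
    then show ?thesis using q0 by (rule mult_left_le_imp_le)
  qed
  define f where "f c = (deg c)^2 - 8 * real (badc c)" for c
  have fsum: "(\<Sum>c\<in>Q. f c) \<ge> q * (q^2 / (8 * \<kappa>^2))"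
  proof -
    have "(\<Sum>c\<in>Q. f c) = (\<Sum>c\<in>Q. (deg c)^2) - 8 * (\<Sum>c\<in>Q. real (badc c))"
      by (simp add: f_def sum_subtractf sum_distrib_left)
    moreover have "8 * (q^2 * m) = q * (q^2 / (8 * \<kappa>^2))" using k0
      by (simp add: m_def field_simps power2_eq_square)
    moreover have "q * (q^2 / (8 * \<kappa>^2)) = q^3/(4*\<kappa>^2) - q * (q^2 / (8 * \<kappa>^2))" using k0
      by (simp add: field_simps power2_eq_square power3_eq_cube)
    ultimately show ?thesis using degsq B3 by linarith
  qed
  obtain c where cQ: "c \<in> Q" and fc: "f c \<ge> q^2 / (8 * \<kappa>^2)"
  proof (rule ccontr)
    assume "\<not> thesis"
    then have "\<forall>c\<in>Q. f c < q^2 / (8 * \<kappa>^2)" using that by force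
    then have "(\<Sum>c\<in>Q. f c) < card Q * (q^2 / (8 * \<kappa>^2))"
      using fQ Qne by (intro sum_bounded_above_strict) (auto simp: card_gt_0_iff)
    then show False using fsum by (simp add: q_def)
  qed
  define A' where "A' = nbr c"
  define \<alpha> where "\<alpha> = real (card A')"
  have fA': "finite A'" by (simp add: A'_def fnbr)
  have A'Q: "A' \<subseteq> Q" by (simp add: A'_def nbrQ)
  have pos: "q^2 / (8 * \<kappa>^2) > 0" using q0 k0 by simp
  have \<alpha>2: "q^2 / (8 * \<kappa>^2) + 8 * real (badc c) \<le> \<alpha>^2"
    using fc by (simp add: f_def deg_def \<alpha>_def A'_def)
  have \<alpha>0: "\<alpha> > 0"
  proof -
    have "\<alpha>^2 > 0" using \<alpha>2 pos by (smt (verit) of_nat_0_le_iff)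
    moreover have "\<alpha> \<ge> 0" by (simp add: \<alpha>_def)
    ultimately show ?thesis by (metis less_eq_real_def power_eq_0_iff zero_less_power2 not_less)
  qed
  define bc where "bc a = real (card {a'\<in>A'. (a,a') \<in> Bad})" for a
  have bcsum: "(\<Sum>a\<in>A'. bc a) = real (badc c)"
  proof -
    have "(\<Sum>a\<in>A'. card {a'\<in>A'. (a,a') \<in> Bad}) = card (Sigma A' (\<lambda>a. {a'\<in>A'. (a,a') \<in> Bad}))"
      using fA' by (simp add: card_SigmaI)
    also have "Sigma A' (\<lambda>a. {a'\<in>A'. (a,a') \<in> Bad}) = Bad \<inter> (nbr c \<times> nbr c)"
      by (auto simp: A'_def)
    finally show ?thesis by (simp add: bc_def badc_def flip: of_nat_sum)
  qed
  have bc0: "bc a \<ge> 0" for a by (simp add: bc_def)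
  define A'' where "A'' = {a\<in>A'. bc a \<le> \<alpha>/4}"
  have A''A': "A'' \<subseteq> A'" by (auto simp: A''_def)
  have fA'': "finite A''" using fA' A''A' finite_subset by blast
  have A''card: "real (card A'') \<ge> \<alpha>/2"
  proof -
    define R where "R = A' - A''"
    have "real (card R) * (\<alpha>/4) \<le> (\<Sum>a\<in>R. bc a)"
      by (intro sum_bounded_below) (auto simp: R_def A''_def)
    also have "\<dots> \<le> (\<Sum>a\<in>A'. bc a)" using fA' bc0 by (intro sum_mono2) (auto simp: R_def)
    also have "\<dots> \<le> \<alpha>^2 / 8" using bcsum \<alpha>2 pos by simp
    finally have "real (card R) * (\<alpha>/4) \<le> \<alpha>^2 / 8" .
    then have "real (card R) \<le> \<alpha>/2" using \<alpha>0 by (simp add: power2_eq_square field_simps)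
    moreover have "card R = card A' - card A''" using fA'' A''A' by (simp add: R_def card_Diff_subset)
    moreover have "card A'' \<le> card A'" using fA' A''A' by (simp add: card_mono)
    ultimately show ?thesis by (simp add: \<alpha>_def of_nat_diff)
  qed
  have A''ne: "A'' \<noteq> {}" using A''card \<alpha>0 by auto
  define s where "s p = fst p + snd p" for p :: "real \<times> real"
  define QQ where "QQ = Q \<times> Q"
  have fQQ: "finite QQ" using fQ by (simp add: QQ_def)
  define Rep where "Rep d = {t \<in> QQ \<times> QQ \<times> QQ \<times> QQ.
     s (fst t) - s (fst (snd t)) + s (fst (snd (snd t))) - s (snd (snd (snd t))) = d}" for d
  define S2 where "S2 y = {p\<in>QQ. s p = y}" for y
  have cardS2: "real (card (S2 y)) = \<rho> y" for y
  proof -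
    have "S2 y = (\<lambda>x. (x, y - x)) ` {x\<in>Q. y - x \<in> Q}"
      by (auto simp: S2_def QQ_def s_def image_iff)
    moreover have "inj_on (\<lambda>x. (x, y - x)) {x\<in>Q. y - x \<in> Q}" by (auto simp: inj_on_def)
    ultimately show ?thesis by (simp add: \<rho>_def card_image)
  qed
  have fS2: "finite (S2 y)" for y using fQQ by (simp add: S2_def)
  define R0 where "R0 = \<alpha>/2 * m^2 * (q/(2*\<kappa>))^4"
  have rep: "real (card (Rep (a - a'))) \<ge> R0" if aA: "a \<in> A''" and a'A: "a' \<in> A''" for a a'
  proof -
    have aQ: "a \<in> Q" and a'Q: "a' \<in> Q" using aA a'A A''A' A'Q by auto
    define W where "W = {b\<in>A'. (a,b) \<notin> Bad \<and> (a',b) \<notin> Bad}"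
    have fW: "finite W" using fA' by (simp add: W_def)
    have Wcard: "real (card W) \<ge> \<alpha>/2"
    proof -
      have "A' - W \<subseteq> {b\<in>A'. (a,b) \<in> Bad} \<union> {b\<in>A'. (a',b) \<in> Bad}" by (auto simp: W_def)
      then have "card (A' - W) \<le> card ({b\<in>A'. (a,b) \<in> Bad} \<union> {b\<in>A'. (a',b) \<in> Bad})"
        using fA' by (intro card_mono) auto
      also have "\<dots> \<le> card {b\<in>A'. (a,b) \<in> Bad} + card {b\<in>A'. (a',b) \<in> Bad}" by (rule card_Un_le)
      finally have "real (card (A' - W)) \<le> bc a + bc a'" by (simp add: bc_def)
      also have "\<dots> \<le> \<alpha>/2" using aA a'A by (simp add: A''_def)
      finally have "real (card (A' - W)) \<le> \<alpha>/2" .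
      moreover have "card (A' - W) = card A' - card W" using fA' by (intro card_Diff_subset) (auto simp: W_def fW)
      moreover have "card W \<le> card A'" using fA' by (intro card_mono) (auto simp: W_def)
      ultimately show ?thesis by (simp add: \<alpha>_def of_nat_diff)
    qed
    have codegW: "codeg a b \<ge> m \<and> codeg a' b \<ge> m" if "b \<in> W" for b
      using that aQ a'Q A'Q by (auto simp: W_def Bad_def not_less)
    define T where "T = Sigma W (\<lambda>b. (nbr a \<inter> nbr b) \<times> (nbr a' \<inter> nbr b))"
    have fT: "finite T" using fW fnbr by (simp add: T_def)
    have Tcard: "real (card T) \<ge> \<alpha>/2 * m^2"
    proof -
      have "card T = (\<Sum>b\<in>W. card ((nbr a \<inter> nbr b) \<times> (nbr a' \<inter> nbr b)))"
        unfolding T_def using fW fnbr by (simp add: card_SigmaI)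
      then have "real (card T) = (\<Sum>b\<in>W. codeg a b * codeg a' b)"
        by (simp add: card_cartesian_product codeg_def)
      also have "\<dots> \<ge> real (card W) * (m * m)"
        using codegW m0 by (intro sum_bounded_below mult_mono) (auto simp: codeg_def)
      finally have "real (card T) \<ge> real (card W) * m^2" by (simp add: power2_eq_square)
      moreover have "real (card W) * m^2 \<ge> \<alpha>/2 * m^2" using mult_right_mono[OF Wcard, of "m^2"] by simp
      ultimately show ?thesis by linarith
    qed
    define piece where "piece t = (case t of (b, c1, c2) \<Rightarrow> S2 (a + c1) \<times> S2 (b + c1) \<times> S2 (b + c2) \<times> S2 (a' + c2))" for t
    have piece_sub: "piece t \<subseteq> Rep (a - a')" if "t \<in> T" for t
      using that by (auto simp: piece_def Rep_def S2_def T_def split: prod.splits)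
    have piece_fin: "finite (piece t)" for t by (simp add: piece_def fS2 split: prod.splits)
    have piece_disj: "piece t \<inter> piece t' = {}" if "t \<in> T" "t' \<in> T" "t \<noteq> t'" for t t'
    proof -
      obtain b c1 c2 where t: "t = (b, c1, c2)" by (cases t) auto
      obtain b' c1' c2' where t': "t' = (b', c1', c2')" by (cases t') auto
      show ?thesis
      proof (rule ccontr)
        assume "piece t \<inter> piece t' \<noteq> {}"
        then obtain z where z: "z \<in> piece t" "z \<in> piece t'" by blast
        then have "a + c1 = a + c1'" "b + c1 = b' + c1'" "b + c2 = b' + c2'"
          by (auto simp: piece_def t t' S2_def)
        then have "t = t'" by (simp add: t t')
        then show False using that by simp
      qed
    qed
    have piece_card: "real (card (piece t)) \<ge> (q/(2*\<kappa>))^4" if "t \<in> T" for t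
    proof -
      obtain b c1 c2 where t: "t = (b, c1, c2)" by (cases t) auto
      have mem: "a + c1 \<in> P" "b + c1 \<in> P" "b + c2 \<in> P" "a' + c2 \<in> P"
        using that by (auto simp: t T_def nbr_def add.commute)
      have ge: "\<rho> y \<ge> q/(2*\<kappa>)" if "y \<in> P" for y using that by (simp add: P_def)
      have "real (card (piece t)) = \<rho> (a + c1) * \<rho> (b + c1) * \<rho> (b + c2) * \<rho> (a' + c2)"
        by (simp add: piece_def t card_cartesian_product cardS2[symmetric])
      also have "\<dots> \<ge> (q/(2*\<kappa>)) * (q/(2*\<kappa>)) * (q/(2*\<kappa>)) * (q/(2*\<kappa>))"
        using ge[OF mem(1)] ge[OF mem(2)] ge[OF mem(3)] ge[OF mem(4)] q0 k0
        by (intro mult_mono) (auto simp: \<rho>0)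
      finally show ?thesis by (simp add: power4_eq_xxxx)
    qed
    have "card (\<Union>t\<in>T. piece t) = (\<Sum>t\<in>T. card (piece t))"
      using fT piece_fin piece_disj by (intro card_UN_disjoint) auto
    then have "real (card (\<Union>t\<in>T. piece t)) = (\<Sum>t\<in>T. real (card (piece t)))" by simp
    also have "\<dots> \<ge> real (card T) * (q/(2*\<kappa>))^4"
      using piece_card by (intro sum_bounded_below) auto
    finally have "real (card (\<Union>t\<in>T. piece t)) \<ge> real (card T) * (q/(2*\<kappa>))^4" .
    moreover have "card (\<Union>t\<in>T. piece t) \<le> card (Rep (a - a'))"
      using piece_sub fQQ by (intro card_mono) (auto simp: Rep_def)
    moreover have "real (card T) * (q/(2*\<kappa>))^4 \<ge> R0"
      unfolding R0_def using Tcard q0 k0 by (intro mult_right_mono) auto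
    ultimately show ?thesis by linarith
  qed
  define D where "D = A'' + uminus ` A''"
  have fD: "finite D" using fA'' by (simp add: D_def finite_set_plus)
  have repD: "real (card (Rep d)) \<ge> R0" if dD: "d \<in> D" for d
  proof -
    obtain a b where "d = a + b" "a \<in> A''" "b \<in> uminus ` A''" using dD
      unfolding D_def by (rule set_plus_elim)
    then obtain a' where "a' \<in> A''" "d = a - a'" by auto
    then show ?thesis using rep \<open>a \<in> A''\<close> by simp
  qed
  have "card (\<Union>d\<in>D. Rep d) = (\<Sum>d\<in>D. card (Rep d))"
    using fD fQQ by (intro card_UN_disjoint) (auto simp: Rep_def)
  then have "real (card (\<Union>d\<in>D. Rep d)) \<ge> real (card D) * R0"
    using repD by (simp only: of_nat_sum) (intro sum_bounded_below, auto)
  moreover have "card (\<Union>d\<in>D. Rep d) \<le> card (QQ \<times> QQ \<times> QQ \<times> QQ)"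
    using fQQ by (intro card_mono) (auto simp: Rep_def)
  moreover have "card (QQ \<times> QQ \<times> QQ \<times> QQ) = card Q ^ 8"
    by (simp add: QQ_def card_cartesian_product eval_nat_numeral mult_ac)
  ultimately have main: "real (card D) * R0 \<le> q ^ 8"
    by (simp add: q_def) (metis of_nat_le_iff of_nat_power order_trans)
  have qa: "q^2 \<le> 8 * \<kappa>^2 * \<alpha>^2"
  proof -
    have "q^2 / (8 * \<kappa>^2) \<le> \<alpha>^2" using \<alpha>2 by simp
    then show ?thesis using k0 by (simp add: field_simps)
  qed
  have hm: "m^2 = q^2/(4096*\<kappa>^4)"
    by (simp add: m_def power_divide power_mult_distrib flip: power_mult)
  have hq: "(q/(2*\<kappa>))^4 = q^4/(16*\<kappa>^4)" by (simp add: power_divide power_mult_distrib)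
  have e8: "\<kappa>^8 = \<kappa>^4 * \<kappa>^4" by (simp flip: power_add)
  have e6: "q^6 = q^2 * q^4" by (simp flip: power_add)
  have R0eq: "R0 * (131072 * \<kappa>^8) = \<alpha> * q^6"
    unfolding R0_def hm hq e8 e6 using k0 by (simp add: field_simps)
  have e86: "q^8 = q^2 * q^6" by (simp flip: power_add)
  have "real (card D) * \<alpha> * q^6 = (real (card D) * R0) * (131072 * \<kappa>^8)"
    by (simp only: mult.assoc R0eq[symmetric])
  also have "\<dots> \<le> q^8 * (131072 * \<kappa>^8)" using main k0 by (intro mult_right_mono) auto
  also have "\<dots> = (131072 * \<kappa>^8 * q^2) * q^6" unfolding e86 by (simp add: mult_ac)
  finally have "real (card D) * \<alpha> * q^6 \<le> (131072 * \<kappa>^8 * q^2) * q^6" .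
  then have "real (card D) * \<alpha> \<le> 131072 * \<kappa>^8 * q^2"
    by (rule mult_right_le_imp_le) (use q0 in simp)
  also have "\<dots> \<le> 131072 * \<kappa>^8 * (8 * \<kappa>^2 * \<alpha>^2)"
    using qa k0 by (intro mult_left_mono) auto
  also have "\<dots> = (1048576 * \<kappa>^10 * \<alpha>) * \<alpha>"
  proof -
    have e10: "\<kappa>^10 = \<kappa>^8 * \<kappa>^2" by (simp flip: power_add)
    show ?thesis unfolding e10 by (simp add: power2_eq_square mult_ac)
  qed
  finally have "real (card D) * \<alpha> \<le> (1048576 * \<kappa>^10 * \<alpha>) * \<alpha>" .
  then have "real (card D) \<le> 1048576 * \<kappa>^10 * \<alpha>" using \<alpha>0 by simp
  also have "\<dots> \<le> 1048576 * \<kappa>^10 * (2 * card A'')" using A''card k0 by (intro mult_left_mono) auto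
  finally have Dfinal: "real (card D) \<le> 2^21 * \<kappa>^10 * card A''" by simp
  have "q^2 \<le> 32 * \<kappa>^2 * real (card A'')^2"
  proof -
    have "\<alpha>^2 \<le> (2 * real (card A''))^2" using A''card \<alpha>0 by (intro power_mono) auto
    then have "8 * \<kappa>^2 * \<alpha>^2 \<le> 8 * \<kappa>^2 * (2 * real (card A''))^2"
      using k0 by (intro mult_left_mono) auto
    also have "\<dots> = 32 * \<kappa>^2 * real (card A'')^2" by (simp add: power_mult_distrib)
    finally show ?thesis using qa by linarith
  qed
  moreover have "A'' \<subseteq> Q" using A''A' A'Q by blast
  ultimately show ?thesis using Dfinal A''ne unfolding D_def q_def by blast
qed




lemma sum_shift_le:
  fixes \<phi> :: "real \<Rightarrow> real"
  assumes fV: "finite V" and fW: "finite W" and z: "\<And>x. x \<notin> V \<Longrightarrow> \<phi> x = 0"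
    and nn: "\<And>x. \<phi> x \<ge> 0" and inj: "inj h"
  shows "(\<Sum>x\<in>W. \<phi> (h x)) \<le> (\<Sum>x\<in>V. \<phi> x)"
proof -
  have "(\<Sum>x\<in>W. \<phi> (h x)) = (\<Sum>z\<in>h ` W. \<phi> z)"
    using sum.reindex[OF inj_on_subset[OF inj subset_UNIV], of \<phi> W] by simp
  also have "\<dots> = (\<Sum>z\<in>h ` W \<inter> V. \<phi> z)"
    by (rule sum.mono_neutral_right) (use fW z in auto)
  also have "\<dots> \<le> (\<Sum>z\<in>V. \<phi> z)"
    by (rule sum_mono2) (use fV nn in auto)
  finally show ?thesis .
qed

definition conv :: "real set \<Rightarrow> (real \<Rightarrow> real) \<Rightarrow> (real \<Rightarrow> real) \<Rightarrow> real \<Rightarrow> real" where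
  "conv V f g y = (\<Sum>x\<in>V. f x * g (y - x))"

definition En :: "real set \<Rightarrow> real set \<Rightarrow> (real \<Rightarrow> real) \<Rightarrow> real" where
  "En V Y f = (\<Sum>y\<in>Y. (conv V f f y)^2)"

lemma inj_minus_left: "inj (\<lambda>x::real. y - x)" by (auto simp: inj_on_def)
lemma inj_minus_right: "inj (\<lambda>y::real. y - x)" by (auto simp: inj_on_def)

lemma conv_le_e:
  assumes fV: "finite V" and rV: "\<And>x. x \<notin> V \<Longrightarrow> r x = 0" and r0: "\<And>x. r x \<ge> (0::real)"
    and f: "\<And>x. 0 \<le> f x \<and> f x \<le> r x" and g: "\<And>x. 0 \<le> g x \<and> g x \<le> r x"
  shows "conv V f g y \<le> (\<Sum>x\<in>V. (r x)^2)"
proof -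
  have "conv V f g y \<le> (\<Sum>x\<in>V. ((r x)^2 + (r (y - x))^2) / 2)"
    unfolding conv_def
  proof (rule sum_mono)
    fix x
    have "f x * g (y - x) \<le> r x * r (y - x)" using f[of x] g[of "y - x"] by (intro mult_mono) auto
    also have "\<dots> \<le> ((r x)^2 + (r (y - x))^2) / 2"
      using sum_squares_ge_zero[of "r x - r (y - x)" 0] by (simp add: power2_diff field_simps power2_eq_square)
    finally show "f x * g (y - x) \<le> ((r x)^2 + (r (y - x))^2) / 2" .
  qed
  also have "\<dots> = ((\<Sum>x\<in>V. (r x)^2) + (\<Sum>x\<in>V. (r (y - x))^2)) / 2"
    by (simp only: sum_divide_distrib[symmetric] sum.distrib)
  also have "\<dots> \<le> ((\<Sum>x\<in>V. (r x)^2) + (\<Sum>x\<in>V. (r x)^2)) / 2"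
    using sum_shift_le[OF fV fV, of "\<lambda>x. (r x)^2" "\<lambda>x. y - x"] rV inj_minus_left by simp
  finally show ?thesis by simp
qed

lemma sum_conv_le:
  assumes fV: "finite V" and fY: "finite Y" and gV: "\<And>x. x \<notin> V \<Longrightarrow> g x = 0"
    and f0: "\<And>x. f x \<ge> (0::real)" and g0: "\<And>x. g x \<ge> 0"
  shows "(\<Sum>y\<in>Y. conv V f g y) \<le> (\<Sum>x\<in>V. f x) * (\<Sum>x\<in>V. g x)"
proof -
  have "(\<Sum>y\<in>Y. conv V f g y) = (\<Sum>x\<in>V. f x * (\<Sum>y\<in>Y. g (y - x)))"
    unfolding conv_def by (simp add: sum.swap[of _ Y] sum_distrib_left)
  also have "\<dots> \<le> (\<Sum>x\<in>V. f x * (\<Sum>z\<in>V. g z))"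
    using sum_shift_le[OF fV fY, of g] gV g0 inj_minus_right f0
    by (intro sum_mono mult_left_mono) auto
  finally show ?thesis by (simp add: sum_distrib_right)
qed


lemma weighted_core:
  fixes V Y :: "real set" and r :: "real \<Rightarrow> real" and K :: real
  assumes fV: "finite V" and fY: "finite Y" and r0: "\<And>x. r x \<ge> 0" and rV: "\<And>x. x \<notin> V \<Longrightarrow> r x = 0"
    and Mpos: "(\<Sum>x\<in>V. r x) > 0" and K1: "K \<ge> 1"
    and hyp: "En V Y r \<ge> (\<Sum>x\<in>V. r x)^2 * (\<Sum>x\<in>V. (r x)^2) / K"
  shows "\<exists>Q''\<subseteq>V. Q'' \<noteq> {} \<and> (\<Sum>x\<in>Q''. r x)^2 \<ge> (\<Sum>x\<in>V. r x)^2 / (2^80 * K^21)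
     \<and> real (card Q'') \<le> 16 * K * (\<Sum>x\<in>V. r x)^2 / (\<Sum>x\<in>V. (r x)^2)
     \<and> real (card (Q'' + uminus ` Q'')) \<le> 2^311 * K^80 * card Q''"
proof -
  define M where "M = (\<Sum>x\<in>V. r x)"
  define e where "e = (\<Sum>x\<in>V. (r x)^2)"
  have M0: "M > 0" using Mpos by (simp add: M_def)
  have K0: "K > 0" using K1 by simp
  have e0: "e > 0"
  proof (rule ccontr)
    assume "\<not> e > 0"
    moreover have "e \<ge> 0" by (simp add: e_def sum_nonneg)
    ultimately have "e = 0" by simp
    then have "\<forall>x\<in>V. (r x)^2 = 0" using fV by (simp add: e_def sum_nonneg_eq_0_iff)
    then have "M = 0" by (simp add: M_def)
    then show False using M0 by simp
  qed
  define \<theta> where "\<theta> = e / (16 * K * M)"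
  define \<Lambda> where "\<Lambda> = 16 * K * e / M"
  have \<theta>0: "\<theta> > 0" using e0 K0 M0 by (simp add: \<theta>_def)
  have \<Lambda>0: "\<Lambda> > 0" using e0 K0 M0 by (simp add: \<Lambda>_def)
  have \<theta>\<Lambda>: "\<theta> \<le> \<Lambda>"
  proof -
    have h1: "M \<le> 16 * K * M" using mult_right_mono[of 1 "16*K" M] K1 M0 by simp
    have "\<theta> \<le> e / M" unfolding \<theta>_def using h1 e0 M0 by (intro divide_left_mono) auto
    also have "e / M \<le> 16 * K * (e / M)" using mult_right_mono[of 1 "16*K" "e/M"] K1 M0 e0 by simp
    finally show ?thesis by (simp add: \<Lambda>_def)
  qed
  define rQ where "rQ x = (if \<theta> \<le> r x \<and> r x \<le> \<Lambda> then r x else 0)" for x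
  define dL where "dL x = (if r x < \<theta> then r x else 0)" for x
  define dH where "dH x = (if \<Lambda> < r x then r x else 0)" for x
  define d where "d x = dL x + dH x" for x
  have rsplit: "r x = rQ x + d x" for x using \<theta>\<Lambda> by (auto simp: rQ_def dL_def dH_def d_def)
  have rQ0: "0 \<le> rQ x \<and> rQ x \<le> r x" for x using r0[of x] by (simp add: rQ_def)
  have dL0: "0 \<le> dL x \<and> dL x \<le> \<theta>" for x using r0[of x] \<theta>0 by (simp add: dL_def)
  have dH0: "0 \<le> dH x" for x using r0[of x] by (simp add: dH_def)
  have d0: "0 \<le> d x" for x using dL0[of x] dH0[of x] by (simp add: d_def)
  have dle: "d x \<le> r x" for x using rsplit[of x] rQ0[of x] by simp
  have dHV: "x \<notin> V \<Longrightarrow> dH x = 0" for x using rV by (simp add: dH_def)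
  have dLV: "x \<notin> V \<Longrightarrow> dL x = 0" for x using rV by (simp add: dL_def)
  have rQV: "x \<notin> V \<Longrightarrow> rQ x = 0" for x using rV by (simp add: rQ_def)
  have dV: "x \<notin> V \<Longrightarrow> d x = 0" for x using dHV dLV by (simp add: d_def)
  have rr: "0 \<le> r x \<and> r x \<le> r x" for x using r0[of x] by simp
  define c where "c y = conv V r r y" for y
  define cQ where "cQ y = conv V rQ rQ y" for y
  have c_le: "c y \<le> e" for y unfolding c_def e_def by (rule conv_le_e[OF fV rV r0 rr rr])
  have c0: "c y \<ge> 0" for y unfolding c_def conv_def using r0 by (simp add: sum_nonneg)
  have cQ_le_e: "cQ y \<le> e" for y unfolding cQ_def e_def by (rule conv_le_e[OF fV rV r0 rQ0 rQ0])
  have cQ0: "cQ y \<ge> 0" for y unfolding cQ_def conv_def using rQ0 by (simp add: sum_nonneg)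
  have sum_c: "(\<Sum>y\<in>Y. c y) \<le> M * M"
    unfolding c_def M_def by (rule sum_conv_le[OF fV fY rV r0 r0])
  have sumshift: "(\<Sum>x\<in>V. r (y - x)) \<le> M" for y
    unfolding M_def by (rule sum_shift_le[OF fV fV]) (use rV r0 inj_minus_left in auto)
  have sumshift2: "(\<Sum>y\<in>Y. r (y - x)) \<le> M" for x
    unfolding M_def by (rule sum_shift_le[OF fV fY]) (use rV r0 inj_minus_right in auto)
  have sumdH: "(\<Sum>x\<in>V. dH x) \<le> e / \<Lambda>"
  proof -
    have "(\<Sum>x\<in>V. dH x) \<le> (\<Sum>x\<in>V. (r x)^2 / \<Lambda>)"
    proof (rule sum_mono)
      fix x
      show "dH x \<le> (r x)^2 / \<Lambda>"
      proof (cases "\<Lambda> < r x")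
        case True
        then have "r x * \<Lambda> \<le> r x * r x" using r0[of x] by (intro mult_left_mono) auto
        then show ?thesis using True \<Lambda>0 by (simp add: dH_def field_simps power2_eq_square)
      qed (use \<Lambda>0 in \<open>simp add: dH_def\<close>)
    qed
    then show ?thesis by (simp add: e_def sum_divide_distrib)
  qed
  have sumdH2: "(\<Sum>y\<in>Y. dH (y - x)) \<le> e / \<Lambda>" for x
    using sum_shift_le[OF fV fY, of dH "\<lambda>y. y - x"] dHV dH0 inj_minus_right sumdH by simp
  have cdiff: "c y - cQ y \<le> conv V d r y + conv V r d y" for y
  proof -
    have "c y \<le> (\<Sum>x\<in>V. rQ x * rQ (y - x) + (d x * r (y - x) + r x * d (y - x)))"
      unfolding c_def conv_def
    proof (rule sum_mono)
      fix x
      have "r x * r (y - x) = rQ x * rQ (y - x) + (d x * r (y - x) + rQ x * d (y - x))"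
        using rsplit[of x] rsplit[of "y - x"] by (simp add: algebra_simps)
      also have "rQ x * d (y - x) \<le> r x * d (y - x)" using rQ0[of x] d0[of "y - x"] by (intro mult_right_mono) auto
      finally show "r x * r (y - x) \<le> rQ x * rQ (y - x) + (d x * r (y - x) + r x * d (y - x))" by simp
    qed
    then show ?thesis by (simp add: cQ_def conv_def sum.distrib)
  qed
  have cQc: "cQ y \<le> c y" for y unfolding c_def cQ_def conv_def
    using rQ0 r0 by (intro sum_mono mult_mono) auto
  define F where "F x = (\<Sum>y\<in>Y. c y * r (y - x))" for x
  have F0: "F x \<ge> 0" for x unfolding F_def using c0 r0 by (simp add: sum_nonneg)
  have Fle: "F x \<le> e * M" for x
  proof -
    have "F x \<le> (\<Sum>y\<in>Y. e * r (y - x))" unfolding F_def using c_le r0 by (intro sum_mono mult_right_mono) auto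
    also have "\<dots> = e * (\<Sum>y\<in>Y. r (y - x))" by (simp add: sum_distrib_left)
    also have "\<dots> \<le> e * M" using sumshift2 e0 by (intro mult_left_mono) auto
    finally show ?thesis .
  qed
  have T1: "(\<Sum>y\<in>Y. c y * conv V d r y) \<le> \<theta> * M * M * M + e * M * (e / \<Lambda>)"
  proof -
    have "(\<Sum>y\<in>Y. c y * conv V d r y) = (\<Sum>x\<in>V. d x * F x)"
      unfolding conv_def F_def by (simp add: sum_distrib_left sum.swap[of _ Y] mult_ac)
    also have "\<dots> = (\<Sum>x\<in>V. dL x * F x) + (\<Sum>x\<in>V. dH x * F x)"
      by (simp add: d_def distrib_right sum.distrib)
    also have "(\<Sum>x\<in>V. dL x * F x) \<le> (\<Sum>x\<in>V. \<theta> * F x)"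
      using dL0 F0 by (intro sum_mono mult_right_mono) auto
    also have "(\<Sum>x\<in>V. \<theta> * F x) = \<theta> * (\<Sum>y\<in>Y. c y * (\<Sum>x\<in>V. r (y - x)))"
      unfolding F_def by (simp add: sum_distrib_left sum.swap[of _ Y])
    also have "\<dots> \<le> \<theta> * (\<Sum>y\<in>Y. c y * M)"
      using \<theta>0 c0 sumshift by (intro mult_left_mono sum_mono) auto
    also have "\<dots> = \<theta> * M * (\<Sum>y\<in>Y. c y)" by (simp add: sum_distrib_right[symmetric])
    also have "\<dots> \<le> \<theta> * M * (M * M)" using sum_c \<theta>0 M0 by (intro mult_left_mono) auto
    also have "(\<Sum>x\<in>V. dH x * F x) \<le> (\<Sum>x\<in>V. dH x * (e * M))"
      using dH0 Fle by (intro sum_mono mult_left_mono) auto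
    also have "\<dots> = e * M * (\<Sum>x\<in>V. dH x)" by (simp add: sum_distrib_left mult_ac)
    also have "\<dots> \<le> e * M * (e / \<Lambda>)" using sumdH e0 M0 by (intro mult_left_mono) auto
    finally show ?thesis by (simp add: mult_ac)
  qed
  have T2: "(\<Sum>y\<in>Y. c y * conv V r d y) \<le> M * (\<theta> * (M * M) + e * (e / \<Lambda>))"
  proof -
    define G where "G x = (\<Sum>y\<in>Y. c y * d (y - x))" for x
    have Gle: "G x \<le> \<theta> * (M * M) + e * (e / \<Lambda>)" for x
    proof -
      have "G x = (\<Sum>y\<in>Y. c y * dL (y - x)) + (\<Sum>y\<in>Y. c y * dH (y - x))"
        by (simp add: G_def d_def distrib_left sum.distrib)
      also have "(\<Sum>y\<in>Y. c y * dL (y - x)) \<le> (\<Sum>y\<in>Y. c y * \<theta>)"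
        using c0 dL0 by (intro sum_mono mult_left_mono) auto
      also have "\<dots> = \<theta> * (\<Sum>y\<in>Y. c y)" by (simp add: sum_distrib_left mult_ac)
      also have "\<dots> \<le> \<theta> * (M * M)" using sum_c \<theta>0 by (intro mult_left_mono) auto
      also have "(\<Sum>y\<in>Y. c y * dH (y - x)) \<le> (\<Sum>y\<in>Y. e * dH (y - x))"
        using c_le dH0 by (intro sum_mono mult_right_mono) auto
      also have "\<dots> = e * (\<Sum>y\<in>Y. dH (y - x))" by (simp add: sum_distrib_left)
      also have "\<dots> \<le> e * (e / \<Lambda>)" using sumdH2 e0 by (intro mult_left_mono) auto
      finally show ?thesis by simp
    qed
    have G0: "G x \<ge> 0" for x unfolding G_def using c0 d0 by (simp add: sum_nonneg)
    have "(\<Sum>y\<in>Y. c y * conv V r d y) = (\<Sum>x\<in>V. r x * G x)"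
      unfolding conv_def G_def by (simp add: sum_distrib_left sum.swap[of _ Y] mult_ac)
    also have "\<dots> \<le> (\<Sum>x\<in>V. r x * (\<theta> * (M * M) + e * (e / \<Lambda>)))"
      using r0 Gle by (intro sum_mono mult_left_mono) auto
    also have "\<dots> = M * (\<theta> * (M * M) + e * (e / \<Lambda>))" by (simp add: M_def sum_distrib_right[symmetric])
    finally show ?thesis .
  qed
  have Ediff: "En V Y r - En V Y rQ \<le> e * M^2 / (2 * K)"
  proof -
    have "En V Y r - En V Y rQ = (\<Sum>y\<in>Y. (c y)^2 - (cQ y)^2)"
      by (simp add: En_def c_def cQ_def sum_subtractf)
    also have "\<dots> \<le> (\<Sum>y\<in>Y. 2 * c y * (conv V d r y + conv V r d y))"
    proof (rule sum_mono)
      fix y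
      have "(c y)^2 - (cQ y)^2 = (c y - cQ y) * (c y + cQ y)" by (simp add: power2_eq_square algebra_simps)
      also have "\<dots> \<le> (conv V d r y + conv V r d y) * (2 * c y)"
        using cdiff[of y] cQc[of y] cQ0[of y] by (intro mult_mono) auto
      finally show "(c y)^2 - (cQ y)^2 \<le> 2 * c y * (conv V d r y + conv V r d y)" by (simp add: mult_ac)
    qed
    also have "\<dots> = 2 * (\<Sum>y\<in>Y. c y * conv V d r y) + 2 * (\<Sum>y\<in>Y. c y * conv V r d y)"
      by (simp add: sum_distrib_left sum.distrib distrib_left mult_ac)
    also have "\<dots> \<le> 2 * (\<theta> * M * M * M + e * M * (e / \<Lambda>)) + 2 * (M * (\<theta> * (M * M) + e * (e / \<Lambda>)))"
      using T1 T2 by (intro add_mono mult_left_mono) auto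
    also have "\<dots> = e * M^2 / (2 * K)"
      using K0 M0 e0 by (simp add: \<theta>_def \<Lambda>_def field_simps power2_eq_square)
    finally show ?thesis .
  qed
  have EQ: "En V Y rQ \<ge> e * M^2 / (2 * K)"
  proof -
    have "M^2 * e / K - e * M^2 / (2 * K) = e * M^2 / (2 * K)" using K0 by (simp add: field_simps)
    moreover have "En V Y r \<ge> M^2 * e / K" using hyp by (simp add: M_def e_def)
    ultimately show ?thesis using Ediff by linarith
  qed
  define mQ where "mQ = (\<Sum>x\<in>V. rQ x)"
  have EQup: "En V Y rQ \<le> e * (mQ * mQ)"
  proof -
    have "En V Y rQ \<le> (\<Sum>y\<in>Y. e * cQ y)"
      unfolding En_def cQ_def[symmetric]
      using cQ_le_e cQ0 by (intro sum_mono) (simp add: power2_eq_square mult_right_mono)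
    also have "\<dots> = e * (\<Sum>y\<in>Y. cQ y)" by (simp add: sum_distrib_left)
    also have "\<dots> \<le> e * (mQ * mQ)"
      unfolding cQ_def mQ_def using e0 sum_conv_le[OF fV fY rQV] rQ0
      by (intro mult_left_mono) auto
    finally show ?thesis .
  qed
  have mQ2: "mQ^2 \<ge> M^2 / (2 * K)"
  proof -
    have "e * (M^2 / (2 * K)) \<le> e * mQ^2" using EQ EQup by (simp add: power2_eq_square)
    then show ?thesis using e0 by (rule mult_left_le_imp_le)
  qed
  define Q where "Q = {x\<in>V. \<theta> \<le> r x \<and> r x \<le> \<Lambda>}"
  have QV: "Q \<subseteq> V" by (auto simp: Q_def)
  have fQ: "finite Q" using fV QV finite_subset by blast
  have mQQ: "mQ = (\<Sum>x\<in>Q. r x)"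
    unfolding mQ_def rQ_def Q_def using fV by (simp add: sum.inter_filter[symmetric])
  have mQ0: "mQ \<ge> 0" unfolding mQ_def using rQ0 by (simp add: sum_nonneg)
  have mQpos: "mQ > 0"
  proof -
    have "M^2 / (2 * K) > 0" using M0 K0 by simp
    then have "mQ^2 > 0" using mQ2 by linarith
    then show ?thesis using mQ0 by (simp add: less_le)
  qed
  have Qne: "Q \<noteq> {}" using mQpos mQQ by auto
  have Qcard_up: "real (card Q) * \<theta> \<le> M"
  proof -
    have "real (card Q) * \<theta> \<le> (\<Sum>x\<in>Q. r x)" by (rule sum_bounded_below) (simp add: Q_def)
    also have "\<dots> \<le> M" unfolding M_def using fV QV r0 by (intro sum_mono2) auto
    finally show ?thesis .
  qed
  have Qcard_lo: "mQ \<le> \<Lambda> * real (card Q)"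
  proof -
    have "(\<Sum>x\<in>Q. r x) \<le> real (card Q) * \<Lambda>" by (rule sum_bounded_above) (simp add: Q_def)
    then show ?thesis using mQQ by (simp add: mult.commute)
  qed
  define \<rho> where "\<rho> y = real (card {x\<in>Q. y - x \<in> Q})" for y
  have cQ\<rho>: "cQ y \<le> \<Lambda>^2 * \<rho> y" for y
  proof -
    have "cQ y \<le> (\<Sum>x\<in>V. \<Lambda>^2 * of_bool (x \<in> Q \<and> y - x \<in> Q))"
      unfolding cQ_def conv_def
    proof (rule sum_mono)
      fix x
      show "rQ x * rQ (y - x) \<le> \<Lambda>^2 * of_bool (x \<in> Q \<and> y - x \<in> Q)"
      proof (cases "x \<in> Q \<and> y - x \<in> Q")
        case True
        then have "rQ x \<le> \<Lambda>" "rQ (y - x) \<le> \<Lambda>" by (auto simp: rQ_def Q_def)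
        then have "rQ x * rQ (y - x) \<le> \<Lambda> * \<Lambda>" using rQ0[of x] rQ0[of "y - x"] by (intro mult_mono) auto
        then show ?thesis using True by (simp add: power2_eq_square)
      next
        case False
        then have "rQ x = 0 \<or> rQ (y - x) = 0" using rV by (auto simp: rQ_def Q_def)
        then show ?thesis by auto
      qed
    qed
    also have "\<dots> = \<Lambda>^2 * real (card (V \<inter> {x. x \<in> Q \<and> y - x \<in> Q}))"
      using fV by (simp add: sum_distrib_left[symmetric] sum_of_bool_eq)
    also have "V \<inter> {x. x \<in> Q \<and> y - x \<in> Q} = {x\<in>Q. y - x \<in> Q}" using QV by auto
    finally show ?thesis by (simp add: \<rho>_def)
  qed
  have E\<rho>: "En V Y rQ \<le> \<Lambda>^4 * (\<Sum>y\<in>Y. (\<rho> y)^2)"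
  proof -
    have "En V Y rQ \<le> (\<Sum>y\<in>Y. (\<Lambda>^2 * \<rho> y)^2)"
      unfolding En_def cQ_def[symmetric] using cQ\<rho> cQ0 by (intro sum_mono power_mono) auto
    also have "\<dots> = \<Lambda>^4 * (\<Sum>y\<in>Y. (\<rho> y)^2)"
      by (simp add: sum_distrib_left power_mult_distrib flip: power_mult)
    finally show ?thesis .
  qed
  define \<kappa> where "\<kappa> = 2^29 * K^8"
  have \<kappa>1: "\<kappa> \<ge> 1"
  proof -
    have "(1::real) \<le> K^8" using K1 by simp
    then show ?thesis by (simp add: \<kappa>_def)
  qed
  have hypQ: "(\<Sum>y\<in>Y. (real (card {x\<in>Q. y - x \<in> Q}))^2) \<ge> real (card Q)^3 / \<kappa>"
  proof -
    have "real (card Q) \<le> M / \<theta>" using Qcard_up \<theta>0 by (simp add: field_simps)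
    then have "real (card Q)^3 \<le> (M / \<theta>)^3" by (intro power_mono) auto
    then have "real (card Q)^3 / \<kappa> \<le> (M / \<theta>)^3 / \<kappa>" using \<kappa>1 by (intro divide_right_mono) auto
    also have "(M / \<theta>)^3 / \<kappa> = e * M^2 / (2 * K) / \<Lambda>^4"
      using K0 M0 e0 by (simp add: \<theta>_def \<Lambda>_def \<kappa>_def field_simps power2_eq_square power3_eq_cube
          power4_eq_xxxx eval_nat_numeral)
    also have "\<dots> \<le> En V Y rQ / \<Lambda>^4" using EQ \<Lambda>0 by (intro divide_right_mono) auto
    also have "\<dots> \<le> (\<Sum>y\<in>Y. (\<rho> y)^2)" using E\<rho> \<Lambda>0 by (simp add: field_simps)
    finally show ?thesis by (simp add: \<rho>_def)
  qed
  obtain Q'' where Q''Q: "Q'' \<subseteq> Q" and Q''ne: "Q'' \<noteq> {}"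
    and Q''big: "real (card Q)^2 \<le> 32 * \<kappa>^2 * real (card Q'')^2"
    and Q''dbl: "real (card (Q'' + uminus ` Q'')) \<le> 2^21 * \<kappa>^10 * card Q''"
    using bsg[OF fQ Qne fY \<kappa>1 hypQ] by blast
  have fQ'': "finite Q''" using fQ Q''Q finite_subset by blast
  have mass: "(\<Sum>x\<in>Q''. r x) \<ge> real (card Q'') * \<theta>"
    by (rule sum_bounded_below) (use Q''Q in \<open>auto simp: Q_def\<close>)
  have mass2: "(\<Sum>x\<in>Q''. r x)^2 \<ge> M^2 / (2^80 * K^21)"
  proof -
    have a1: "(real (card Q'') * \<theta>)^2 \<le> (\<Sum>x\<in>Q''. r x)^2"
      using mass \<theta>0 by (intro power_mono) auto
    have "mQ^2 \<le> (\<Lambda> * real (card Q))^2" using Qcard_lo mQ0 by (intro power_mono) auto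
    then have a2: "M^2 / (2 * K) \<le> \<Lambda>^2 * real (card Q)^2" using mQ2 by (simp add: power_mult_distrib)
    have a3: "\<Lambda>^2 * real (card Q)^2 \<le> \<Lambda>^2 * (32 * \<kappa>^2 * real (card Q'')^2)"
      using Q''big by (intro mult_left_mono) auto
    have "M^2 / (2 * K) \<le> \<Lambda>^2 * (32 * \<kappa>^2 * real (card Q'')^2)" using a2 a3 by linarith
    then have "M^2 / (2 * K) \<le> (\<Lambda>^2 * 32 * \<kappa>^2) * real (card Q'')^2" by (simp add: mult_ac)
    then have "M^2 / (2 * K) / (\<Lambda>^2 * 32 * \<kappa>^2) \<le> real (card Q'')^2"
      using \<Lambda>0 \<kappa>1 by (subst pos_divide_le_eq) (auto simp: mult_ac)
    then have "M^2 / (2 * K) / (\<Lambda>^2 * 32 * \<kappa>^2) * \<theta>^2 \<le> real (card Q'')^2 * \<theta>^2"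
      by (rule mult_right_mono) simp
    then have "M^2 / (2 * K) / (\<Lambda>^2 * 32 * \<kappa>^2) * \<theta>^2 \<le> (real (card Q'') * \<theta>)^2"
      by (simp add: power_mult_distrib)
    moreover have "M^2 / (2 * K) / (\<Lambda>^2 * 32 * \<kappa>^2) * \<theta>^2 = M^2 / (2^80 * K^21)"
      using K0 M0 e0 by (simp add: \<theta>_def \<Lambda>_def \<kappa>_def field_simps power2_eq_square eval_nat_numeral)
    ultimately show ?thesis using a1 by linarith
  qed
  have card_le: "real (card Q'') \<le> 16 * K * M^2 / e"
  proof -
    have "card Q'' \<le> card Q" using fQ Q''Q by (simp add: card_mono)
    then have "real (card Q'') * \<theta> \<le> real (card Q) * \<theta>" using \<theta>0 by (intro mult_right_mono) auto
    then have "real (card Q'') * \<theta> \<le> M" using Qcard_up by linarith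
    then have "real (card Q'') \<le> M / \<theta>" using \<theta>0 by (simp add: field_simps)
    also have "M / \<theta> = 16 * K * M^2 / e" using K0 M0 e0 by (simp add: \<theta>_def field_simps power2_eq_square)
    finally show ?thesis .
  qed
  have "(2::real)^21 * \<kappa>^10 = 2^311 * K^80"
    by (simp add: \<kappa>_def power_mult_distrib flip: power_mult)
  then have dbl: "real (card (Q'' + uminus ` Q'')) \<le> 2^311 * K^80 * card Q''" using Q''dbl by simp
  show ?thesis
    using Q''Q QV Q''ne mass2 card_le dbl unfolding M_def e_def by (intro exI[of _ Q'']) auto
qed




lemma En_upper:
  assumes fV: "finite V" and fY: "finite Y" and r0: "\<And>x. r x \<ge> 0" and rV: "\<And>x. x \<notin> V \<Longrightarrow> r x = 0"
  shows "En V Y r \<le> (\<Sum>x\<in>V. (r x)^2) * (\<Sum>x\<in>V. r x)^2"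
proof -
  have rr: "0 \<le> r x \<and> r x \<le> r x" for x using r0[of x] by simp
  have c0: "conv V r r y \<ge> 0" for y unfolding conv_def using r0 by (simp add: sum_nonneg)
  have "En V Y r \<le> (\<Sum>y\<in>Y. (\<Sum>x\<in>V. (r x)^2) * conv V r r y)"
    unfolding En_def
  proof (rule sum_mono)
    fix y
    have "conv V r r y * conv V r r y \<le> (\<Sum>x\<in>V. (r x)^2) * conv V r r y"
      using conv_le_e[OF fV rV r0 rr rr, where y=y] c0[of y] by (intro mult_right_mono) auto
    then show "(conv V r r y)^2 \<le> (\<Sum>x\<in>V. (r x)^2) * conv V r r y" by (simp add: power2_eq_square)
  qed
  also have "\<dots> = (\<Sum>x\<in>V. (r x)^2) * (\<Sum>y\<in>Y. conv V r r y)" by (simp add: sum_distrib_left)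
  also have "\<dots> \<le> (\<Sum>x\<in>V. (r x)^2) * ((\<Sum>x\<in>V. r x) * (\<Sum>x\<in>V. r x))"
    using sum_conv_le[OF fV fY rV r0 r0] by (intro mult_left_mono) (auto simp: sum_nonneg)
  finally show ?thesis by (simp add: power2_eq_square)
qed

definition tup :: "nat \<Rightarrow> real set \<Rightarrow> (nat \<Rightarrow> real) set" where
  "tup t A = {0..<t} \<rightarrow>\<^sub>E A"
definition sg :: "nat \<Rightarrow> (nat \<Rightarrow> real) \<Rightarrow> real" where
  "sg t f = (\<Sum>i<t. f i)"
definition cnt :: "nat \<Rightarrow> real set \<Rightarrow> real \<Rightarrow> nat" where
  "cnt t A x = card {f \<in> tup t A. sg t f = x}"
definition sp :: "nat \<Rightarrow> nat \<Rightarrow> (nat \<Rightarrow> real) \<Rightarrow> (nat \<Rightarrow> real) \<times> (nat \<Rightarrow> real)" where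
  "sp a b f = (restrict f {0..<a}, restrict (\<lambda>i. f (a + i)) {0..<b})"

lemma finite_tup: "finite A \<Longrightarrow> finite (tup t A)"
  by (simp add: tup_def finite_PiE)

lemma card_tup: "finite A \<Longrightarrow> card (tup t A) = card A ^ t"
  by (simp add: tup_def card_funcsetE)

lemma sum_lessThan_add: "(\<Sum>i<a+b. f i) = (\<Sum>i<a. f i) + (\<Sum>i<b. f (a+i)::real)" for b :: nat
  by (induction b) (simp_all add: add.assoc)

lemma sg_restrict: "sg t (restrict f {0..<t}) = (\<Sum>i<t. f i)"
  unfolding sg_def by (intro sum.cong) auto

lemma sg_sp: "sg (a+b) f = sg a (fst (sp a b f)) + sg b (snd (sp a b f))"
  by (simp only: sp_def fst_conv snd_conv sg_restrict) (simp add: sg_def sum_lessThan_add)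

lemma split_bij: "bij_betw (sp a b) (tup (a+b) A) (tup a A \<times> tup b A)"
proof (rule bij_betwI[where g="\<lambda>p i. if i < a then fst p i else if i < a + b then snd p (i - a) else undefined"])
  show "sp a b \<in> tup (a + b) A \<rightarrow> tup a A \<times> tup b A"
    by (auto simp: sp_def tup_def PiE_iff)
  show "(\<lambda>p i. if i < a then fst p i else if i < a + b then snd p (i - a) else undefined)
      \<in> tup a A \<times> tup b A \<rightarrow> tup (a + b) A"
    by (auto simp: tup_def PiE_iff)
  show "(\<lambda>i. if i < a then fst (sp a b f) i else if i < a + b then snd (sp a b f) (i - a) else undefined) = f"
    if "f \<in> tup (a + b) A" for f
  proof
    fix i
    show "(if i < a then fst (sp a b f) i else if i < a + b then snd (sp a b f) (i - a) else undefined) = f i"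
      using that by (auto simp: sp_def tup_def PiE_iff extensional_def)
  qed
  show "sp a b (\<lambda>i. if i < a then fst p i else if i < a + b then snd p (i - a) else undefined) = p"
    if "p \<in> tup a A \<times> tup b A" for p
  proof -
    obtain g h where p: "p = (g, h)" by (cases p)
    have g: "g \<in> {0..<a} \<rightarrow>\<^sub>E A" and h: "h \<in> {0..<b} \<rightarrow>\<^sub>E A" using that p by (auto simp: tup_def)
    show ?thesis using g h by (auto simp: sp_def p PiE_iff extensional_def fun_eq_iff)
  qed
qed

lemma card_split: "card {f \<in> tup (a+b) A. P (sp a b f)} = card {p \<in> tup a A \<times> tup b A. P p}"
proof -
  have bij: "bij_betw (sp a b) (tup (a+b) A) (tup a A \<times> tup b A)" by (rule split_bij)
  have img: "sp a b ` tup (a+b) A = tup a A \<times> tup b A" using bij by (rule bij_betw_imp_surj_on)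
  have "sp a b ` {f \<in> tup (a+b) A. P (sp a b f)} = {p \<in> tup a A \<times> tup b A. P p}"
  proof
    show "sp a b ` {f \<in> tup (a+b) A. P (sp a b f)} \<subseteq> {p \<in> tup a A \<times> tup b A. P p}"
    proof
      fix p assume "p \<in> sp a b ` {f \<in> tup (a+b) A. P (sp a b f)}"
      then obtain f where f0: "f \<in> {f \<in> tup (a+b) A. P (sp a b f)}" and f3: "p = sp a b f" by (rule imageE)
      then have f: "f \<in> tup (a+b) A" "P (sp a b f)" "p = sp a b f" by auto
      then have "p \<in> sp a b ` tup (a+b) A" by (intro image_eqI[of p "sp a b" f]) auto
      then have "p \<in> tup a A \<times> tup b A" using img by simp
      then show "p \<in> {p \<in> tup a A \<times> tup b A. P p}" using f by simp
    qed
    show "{p \<in> tup a A \<times> tup b A. P p} \<subseteq> sp a b ` {f \<in> tup (a+b) A. P (sp a b f)}"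
    proof
      fix p assume p: "p \<in> {p \<in> tup a A \<times> tup b A. P p}"
      then have "p \<in> sp a b ` tup (a+b) A" using img by simp
      then obtain f where f: "p = sp a b f" "f \<in> tup (a+b) A" by (rule imageE) auto
      then have "f \<in> {f \<in> tup (a+b) A. P (sp a b f)}" using p by simp
      then show "p \<in> sp a b ` {f \<in> tup (a+b) A. P (sp a b f)}" using f by (intro image_eqI[of p "sp a b" f])
    qed
  qed
  moreover have "inj_on (sp a b) {f \<in> tup (a+b) A. P (sp a b f)}"
    using bij_betw_imp_inj_on[OF bij] by (rule inj_on_subset) blast
  then have "card (sp a b ` {f \<in> tup (a+b) A. P (sp a b f)}) = card {f \<in> tup (a+b) A. P (sp a b f)}"
    by (rule card_image)
  ultimately show ?thesis by simp
qed

lemma card_pairs: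
  assumes "finite S" "finite T"
  shows "card {p \<in> S \<times> T. P (\<phi> (fst p)) (snd p)}
    = (\<Sum>x\<in>\<phi> ` S. card {g\<in>S. \<phi> g = x} * card {h\<in>T. P x h})"
proof -
  have "{p \<in> S \<times> T. P (\<phi> (fst p)) (snd p)} = (\<Union>x\<in>\<phi> ` S. {g\<in>S. \<phi> g = x} \<times> {h\<in>T. P x h})"
    by auto
  moreover have "card (\<Union>x\<in>\<phi> ` S. {g\<in>S. \<phi> g = x} \<times> {h\<in>T. P x h})
     = (\<Sum>x\<in>\<phi> ` S. card ({g\<in>S. \<phi> g = x} \<times> {h\<in>T. P x h}))"
    using assms by (intro card_UN_disjoint) auto
  ultimately show ?thesis by (simp add: card_cartesian_product)
qed

lemma card_fibers:
  assumes "finite S"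
  shows "card {g\<in>S. \<phi> g \<in> X} = (\<Sum>x\<in>\<phi> ` S \<inter> X. card {g\<in>S. \<phi> g = x})"
proof -
  have "{g\<in>S. \<phi> g \<in> X} = (\<Union>x\<in>\<phi> ` S \<inter> X. {g\<in>S. \<phi> g = x})" by auto
  moreover have "card (\<Union>x\<in>\<phi> ` S \<inter> X. {g\<in>S. \<phi> g = x}) = (\<Sum>x\<in>\<phi> ` S \<inter> X. card {g\<in>S. \<phi> g = x})"
    using assms by (intro card_UN_disjoint) auto
  ultimately show ?thesis by simp
qed

lemma energy_eq:
  assumes fA: "finite A"
  shows "energy t A = (\<Sum>x\<in>sg t ` tup t A. (cnt t A x)^2)"
proof -
  have "energy t A = card {f \<in> tup (t+t) A. (\<lambda>p. sg t (fst p) = sg t (snd p)) (sp t t f)}"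
    unfolding energy_def
  proof (intro arg_cong[where f=card] Collect_cong)
    fix f
    have e2: "{0..<2*t} = {0..<t+t}" by (simp add: mult_2)
    have "sg t (fst (sp t t f)) = (\<Sum>i<t. f i)" by (simp add: sp_def sg_restrict)
    moreover have "sg t (snd (sp t t f)) = (\<Sum>i<t. f (t + i))" by (simp add: sp_def sg_restrict)
    ultimately show "(f \<in> {0..<2 * t} \<rightarrow>\<^sub>E A \<and> (\<Sum>i<t. f i) = (\<Sum>i<t. f (t + i))) =
      (f \<in> tup (t + t) A \<and> (\<lambda>p. sg t (fst p) = sg t (snd p)) (sp t t f))"
      by (simp add: tup_def e2)
  qed
  also have "\<dots> = card {p \<in> tup t A \<times> tup t A. sg t (fst p) = sg t (snd p)}"
    by (rule card_split)
  also have "\<dots> = (\<Sum>x\<in>sg t ` tup t A. card {g\<in>tup t A. sg t g = x} * card {h\<in>tup t A. x = sg t h})"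
    by (rule card_pairs[where P="\<lambda>x h. x = sg t h"]) (simp_all add: finite_tup fA)
  also have "\<dots> = (\<Sum>x\<in>sg t ` tup t A. (cnt t A x)^2)"
    by (intro sum.cong refl) (simp add: cnt_def power2_eq_square eq_commute)
  finally show ?thesis .
qed

lemma cnt_add:
  assumes fA: "finite A"
  shows "cnt (a+b) A y = (\<Sum>x\<in>sg a ` tup a A. cnt a A x * cnt b A (y - x))"
proof -
  have "cnt (a+b) A y = card {f \<in> tup (a+b) A. (\<lambda>p. sg a (fst p) + sg b (snd p) = y) (sp a b f)}"
    unfolding cnt_def by (simp add: sg_sp)
  also have "\<dots> = card {p \<in> tup a A \<times> tup b A. sg a (fst p) + sg b (snd p) = y}"
    by (rule card_split)
  also have "\<dots> = (\<Sum>x\<in>sg a ` tup a A. card {g\<in>tup a A. sg a g = x} * card {h\<in>tup b A. x + sg b h = y})"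
    by (rule card_pairs[where P="\<lambda>x h. x + sg b h = y"]) (simp_all add: finite_tup fA)
  also have "\<dots> = (\<Sum>x\<in>sg a ` tup a A. cnt a A x * cnt b A (y - x))"
    by (intro sum.cong refl) (simp add: cnt_def algebra_simps)
  finally show ?thesis .
qed

lemma cnt_sum:
  assumes fA: "finite A"
  shows "(\<Sum>x\<in>sg t ` tup t A. cnt t A x) = card A ^ t"
proof -
  have "card {g\<in>tup t A. sg t g \<in> UNIV} = (\<Sum>x\<in>sg t ` tup t A \<inter> UNIV. card {g\<in>tup t A. sg t g = x})"
    by (rule card_fibers) (simp add: finite_tup fA)
  then show ?thesis by (simp add: cnt_def card_tup fA)
qed

lemma cnt_zero: "x \<notin> sg t ` tup t A \<Longrightarrow> cnt t A x = 0"
proof -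
  assume x: "x \<notin> sg t ` tup t A"
  have e: "{f \<in> tup t A. sg t f = x} = {}" using x by blast
  show ?thesis unfolding cnt_def e by simp
qed


lemma mass_eq:
  assumes fA: "finite A" and QV: "Q \<subseteq> sg k ` tup k A"
  shows "(\<Sum>x\<in>Q. real (cnt k A x)) = real (card {f \<in> tup k A. sg k f \<in> Q})"
proof -
  have "card {f \<in> tup k A. sg k f \<in> Q} = (\<Sum>x\<in>sg k ` tup k A \<inter> Q. card {f \<in> tup k A. sg k f = x})"
    by (rule card_fibers) (simp add: finite_tup fA)
  also have "sg k ` tup k A \<inter> Q = Q" using QV by blast
  finally show ?thesis by (simp add: cnt_def)
qed

lemma tup1:
  assumes fA: "finite A"
  shows "card {h \<in> tup 1 A. P (sg 1 h)} = card {a\<in>A. P a}"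
proof -
  have sg1: "sg 1 h = h 0" "sg (Suc 0) h = h 0" for h by (simp_all add: sg_def)
  have inj: "inj_on (\<lambda>h. h 0) {h \<in> tup 1 A. P (sg 1 h)}"
  proof (rule inj_onI)
    fix h h' :: "nat \<Rightarrow> real" assume h: "h \<in> {h \<in> tup 1 A. P (sg 1 h)}" and h': "h' \<in> {h \<in> tup 1 A. P (sg 1 h)}"
      and eq: "h 0 = h' 0"
    show "h = h'"
    proof
      fix i show "h i = h' i"
      proof (cases "i = 0")
        case True then show ?thesis using eq by simp
      next
        case False
        then have "i \<notin> {0..<1}" by simp
        then show ?thesis using h h' by (simp add: tup_def PiE_def extensional_def)
      qed
    qed
  qed
  have img: "(\<lambda>h. h 0) ` {h \<in> tup 1 A. P (sg 1 h)} = {a\<in>A. P a}"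
  proof
    show "(\<lambda>h. h 0) ` {h \<in> tup 1 A. P (sg 1 h)} \<subseteq> {a\<in>A. P a}"
    proof
      fix a assume "a \<in> (\<lambda>h. h 0) ` {h \<in> tup 1 A. P (sg 1 h)}"
      then obtain h where h: "a = h 0" "h \<in> {h \<in> tup 1 A. P (sg 1 h)}" by (rule imageE)
      then have "h 0 \<in> A" "P (h 0)" by (auto simp: tup_def sg1 PiE_iff)
      then show "a \<in> {a\<in>A. P a}" using h by simp
    qed
    show "{a\<in>A. P a} \<subseteq> (\<lambda>h. h 0) ` {h \<in> tup 1 A. P (sg 1 h)}"
    proof
      fix a assume a: "a \<in> {a\<in>A. P a}"
      define h where "h = restrict (\<lambda>i. a) {0..<1::nat}"
      have hh: "h \<in> {h \<in> tup 1 A. P (sg 1 h)}" using a by (simp add: h_def tup_def sg1)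
      have ah: "a = (\<lambda>h. h 0) h" by (simp add: h_def)
      show "a \<in> (\<lambda>h. h 0) ` {h \<in> tup 1 A. P (sg 1 h)}" by (rule image_eqI[where f="\<lambda>h. h 0" and x=h, OF ah hh])
    qed
  qed
  show ?thesis using card_image[OF inj] img by simp
qed

lemma pigeon:
  assumes fA: "finite A" and Ane: "A \<noteq> {}" and k1: "k \<ge> 1"
  shows "\<exists>x0. real (card {f \<in> tup k A. sg k f \<in> Q}) \<le> real (card A)^(k-1) * real (card {a\<in>A. x0 + a \<in> Q})"
proof -
  define j where "j = k - 1"
  have kj: "k = j + 1" using k1 by (simp add: j_def)
  define w where "w x = card {h \<in> tup 1 A. x + sg 1 h \<in> Q}" for x
  define V' where "V' = sg j ` tup j A"
  have fV': "finite V'" by (simp add: V'_def finite_tup fA)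
  have V'ne: "V' \<noteq> {}"
  proof -
    obtain a where "a \<in> A" using Ane by blast
    then have "restrict (\<lambda>i. a) {0..<j} \<in> tup j A" by (simp add: tup_def)
    then show ?thesis by (auto simp: V'_def)
  qed
  have "Max (w ` V') \<in> w ` V'" using fV' V'ne by (intro Max_in) auto
  then obtain x0 where x0: "Max (w ` V') = w x0" "x0 \<in> V'" by (rule imageE)
  have wmax: "w x \<le> w x0" if "x \<in> V'" for x
    unfolding x0(1)[symmetric] using fV' that by (intro Max_ge) auto
  have "card {f \<in> tup k A. sg k f \<in> Q}
      = card {f \<in> tup (j+1) A. (\<lambda>p. sg j (fst p) + sg 1 (snd p) \<in> Q) (sp j 1 f)}"
    by (simp only: kj sg_sp)
  also have "\<dots> = card {p \<in> tup j A \<times> tup 1 A. sg j (fst p) + sg 1 (snd p) \<in> Q}"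
    by (rule card_split)
  also have "\<dots> = (\<Sum>x\<in>V'. cnt j A x * w x)"
    unfolding V'_def w_def cnt_def
    by (rule card_pairs[where P="\<lambda>x h. x + sg 1 h \<in> Q"]) (simp_all add: finite_tup fA)
  also have "\<dots> \<le> (\<Sum>x\<in>V'. cnt j A x * w x0)" using wmax by (intro sum_mono mult_left_mono) auto
  also have "\<dots> = card A ^ j * w x0" using cnt_sum[OF fA, of j] by (simp add: V'_def sum_distrib_right[symmetric])
  finally have "card {f \<in> tup k A. sg k f \<in> Q} \<le> card A ^ j * w x0" .
  moreover have "w x0 = card {a\<in>A. x0 + a \<in> Q}" unfolding w_def by (rule tup1[OF fA])
  ultimately have "card {f \<in> tup k A. sg k f \<in> Q} \<le> card A ^ (k-1) * card {a\<in>A. x0 + a \<in> Q}"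
    by (simp add: j_def)
  then have "real (card {f \<in> tup k A. sg k f \<in> Q}) \<le> real (card A ^ (k-1) * card {a\<in>A. x0 + a \<in> Q})"
    by (rule of_nat_mono)
  then show ?thesis by (intro exI[of _ x0]) simp
qed

lemma sumdiff_finite: "finite Q \<Longrightarrow> finite (sumdiff m n Q)"
  by (simp add: sumdiff_ms ms_finite finite_set_plus)

lemma sumdiff_translate:
  assumes fQ: "finite Q" and A'Q: "\<And>a. a \<in> A' \<Longrightarrow> x0 + a \<in> Q"
  shows "card (sumdiff m n A') \<le> card (sumdiff m n Q)"
proof -
  have "sumdiff m n A' \<subseteq> (\<lambda>z. z - (real m - real n) * x0) ` sumdiff m n Q"
  proof
    fix z assume "z \<in> sumdiff m n A'"
    then obtain x y where z: "z = (\<Sum>i<m. x i) - (\<Sum>j<n. y j)" and xA: "\<forall>i<m. x i \<in> A'" and yA: "\<forall>j<n. y j \<in> A'"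
      by (auto simp: sumdiff_def)
    define z' where "z' = (\<Sum>i<m. x0 + x i) - (\<Sum>j<n. x0 + y j)"
    have "\<forall>i<m. x0 + x i \<in> Q" "\<forall>j<n. x0 + y j \<in> Q" using xA yA A'Q by auto
    then have "z' \<in> sumdiff m n Q" unfolding z'_def sumdiff_def
      by (intro CollectI exI[of _ "\<lambda>i. x0 + x i"] exI[of _ "\<lambda>j. x0 + y j"]) simp
    moreover have "z = z' - (real m - real n) * x0"
      by (simp add: z z'_def sum.distrib algebra_simps)
    ultimately show "z \<in> (\<lambda>z. z - (real m - real n) * x0) ` sumdiff m n Q" by (rule rev_image_eqI)
  qed
  then have "card (sumdiff m n A') \<le> card ((\<lambda>z. z - (real m - real n) * x0) ` sumdiff m n Q)"
    by (intro card_mono finite_imageI sumdiff_finite fQ)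
  also have "\<dots> \<le> card (sumdiff m n Q)" by (rule card_image_le) (rule sumdiff_finite[OF fQ])
  finally show ?thesis .
qed




lemma main_lemma:
  fixes \<nu> \<delta> :: real and s :: nat and A :: "real set"
  assumes \<nu>1: "\<nu> \<ge> 1" and \<delta>0: "\<delta> > 0" and ev: "even s" and s4: "s \<ge> 4" and fA: "finite A"
    and Ane: "A \<noteq> {}"
    and hyp: "real (energy s A) \<ge> real (card A) powr (2 * real s - \<nu>)"
  shows "real (energy (s div 2) A) > real (card A) powr (real s - \<nu> + \<delta>)
       \<or> (\<exists>A' \<subseteq> A. real (card A') \<ge> (1/2^40) * real (card A) powr (1 - 82 * \<delta>) \<and>
             (\<forall>m n. real (card (sumdiff m n A'))
                 \<le> (16 * 2^(311*(m+n))) * real (card A) powr (\<nu> + 240 * real (m + n) * \<delta>)))"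
proof -
  define k where "k = s div 2"
  have sk: "s = 2 * k" using ev by (simp add: k_def)
  have k1: "k \<ge> 1" using s4 sk by simp
  define N where "N = real (card A)"
  have "0 < card A" using fA Ane by (simp add: card_gt_0_iff)
  then have "1 \<le> card A" by linarith
  then have N1: "N \<ge> 1" by (simp add: N_def)
  have N0: "N > 0" using N1 by simp
  define K where "K = N powr \<delta>"
  have K1: "K \<ge> 1" unfolding K_def using N1 \<delta>0 by (intro ge_one_powr_ge_zero) auto
  have K0: "K > 0" using K1 by simp
  show ?thesis
  proof (cases "real (energy k A) > N powr (real s - \<nu> + \<delta>)")
    case True
    then show ?thesis by (simp add: k_def N_def)
  next
    case False
    have eup: "real (energy k A) \<le> N powr (2 * real k - \<nu>) * K"
    proof -
      have "N powr (real s - \<nu> + \<delta>) = N powr (2 * real k - \<nu>) * K"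
        by (simp add: sk K_def powr_add[symmetric])
      then show ?thesis using False by simp
    qed
    define V where "V = sg k ` tup k A"
    define Y where "Y = sg (2*k) ` tup (2*k) A"
    define r where "r x = real (cnt k A x)" for x
    have fV: "finite V" by (simp add: V_def finite_tup fA)
    have fY: "finite Y" by (simp add: Y_def finite_tup fA)
    have r0: "r x \<ge> 0" for x by (simp add: r_def)
    have rV: "x \<notin> V \<Longrightarrow> r x = 0" for x by (simp add: r_def V_def cnt_zero)
    define M where "M = N ^ k"
    have M0: "M > 0" using N0 by (simp add: M_def)
    have Msum: "(\<Sum>x\<in>V. r x) = M"
    proof -
      have "(\<Sum>x\<in>V. r x) = real (\<Sum>x\<in>V. cnt k A x)" by (simp add: r_def)
      also have "\<dots> = M" by (simp add: V_def cnt_sum fA M_def N_def)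
      finally show ?thesis .
    qed
    define e where "e = real (energy k A)"
    have esum: "(\<Sum>x\<in>V. (r x)^2) = e"
    proof -
      have "(\<Sum>x\<in>V. (r x)^2) = real (\<Sum>x\<in>V. (cnt k A x)^2)" by (simp add: r_def)
      also have "\<dots> = e" by (simp add: e_def V_def energy_eq[OF fA])
      finally show ?thesis .
    qed
    define E where "E = real (energy (2*k) A)"
    have conv_eq: "conv V r r y = real (cnt (2*k) A y)" for y
    proof -
      have "cnt (2*k) A y = cnt (k+k) A y" by (simp add: mult_2)
      also have "\<dots> = (\<Sum>x\<in>V. cnt k A x * cnt k A (y - x))" by (simp add: cnt_add[OF fA] V_def)
      finally show ?thesis by (simp add: conv_def r_def)
    qed
    have Esum: "En V Y r = E"
    proof -
      have "En V Y r = (\<Sum>y\<in>Y. (real (cnt (2*k) A y))^2)" by (simp add: En_def conv_eq)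
      also have "\<dots> = real (\<Sum>y\<in>Y. (cnt (2*k) A y)^2)" by simp
      also have "\<dots> = E" by (simp add: E_def Y_def energy_eq[OF fA])
      finally show ?thesis .
    qed
    have MM: "M^2 = N powr (2 * real k)"
    proof -
      have "N powr (2 * real k) = N powr (real (2 * k))" by simp
      also have "\<dots> = N ^ (2 * k)" using N0 by (rule powr_realpow)
      finally show ?thesis by (simp add: M_def power_mult[symmetric] mult.commute)
    qed
    have hypE: "E \<ge> N powr (2 * real k - \<nu>) * M^2"
    proof -
      have "N powr (2 * real k - \<nu>) * M^2 = N powr (2 * real s - \<nu>)"
        unfolding MM by (simp add: sk powr_add[symmetric])
      then show ?thesis using hyp by (simp add: E_def sk N_def)
    qed
    have "En V Y r \<le> (\<Sum>x\<in>V. (r x)^2) * (\<Sum>x\<in>V. r x)^2"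
      by (rule En_upper[OF fV fY]) (auto simp: r0 rV)
    then have Eup: "E \<le> e * M^2" by (simp add: Esum esum Msum)
    have elow: "e \<ge> N powr (2 * real k - \<nu>)"
    proof -
      have "N powr (2 * real k - \<nu>) * M^2 \<le> e * M^2" using hypE Eup by linarith
      then show ?thesis using M0 by simp
    qed
    have epos: "e > 0" using elow N0 by (smt (verit) powr_gt_zero)
    have corehyp: "En V Y r \<ge> (\<Sum>x\<in>V. r x)^2 * (\<Sum>x\<in>V. (r x)^2) / K"
    proof -
      have "e / K \<le> N powr (2 * real k - \<nu>)" using eup K0 by (simp add: e_def divide_le_eq)
      then have "M^2 * (e / K) \<le> M^2 * N powr (2 * real k - \<nu>)" by (intro mult_left_mono) auto
      then show ?thesis using hypE by (simp add: Esum Msum esum mult.commute)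
    qed
    obtain Q'' where Q''V: "Q'' \<subseteq> V" and Q''ne: "Q'' \<noteq> {}"
      and mass: "(\<Sum>x\<in>Q''. r x)^2 \<ge> M^2 / (2^80 * K^21)"
      and cardQ: "real (card Q'') \<le> 16 * K * M^2 / e"
      and dbl: "real (card (Q'' + uminus ` Q'')) \<le> 2^311 * K^80 * card Q''"
    proof -
      have "\<exists>Q''\<subseteq>V. Q'' \<noteq> {} \<and> (\<Sum>x\<in>Q''. r x)^2 \<ge> (\<Sum>x\<in>V. r x)^2 / (2^80 * K^21)
        \<and> real (card Q'') \<le> 16 * K * (\<Sum>x\<in>V. r x)^2 / (\<Sum>x\<in>V. (r x)^2)
        \<and> real (card (Q'' + uminus ` Q'')) \<le> 2^311 * K^80 * card Q''"
        by (rule weighted_core[OF fV fY _ _ _ K1 corehyp]) (auto simp: r0 rV Msum M0)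
      then show ?thesis using that unfolding Msum esum by blast
    qed
    have fQ'': "finite Q''" using fV Q''V finite_subset by blast
    have cardQ2: "real (card Q'') \<le> 16 * K * N powr \<nu>"
    proof -
      have "M^2 / e \<le> M^2 / N powr (2 * real k - \<nu>)"
        using elow M0 N0 epos by (intro divide_left_mono) auto
      also have "\<dots> = N powr \<nu>" unfolding MM by (simp add: powr_diff[symmetric])
      finally have "16 * K * (M^2 / e) \<le> 16 * K * N powr \<nu>" using K0 by (intro mult_left_mono) auto
      then show ?thesis using cardQ by simp
    qed
    obtain x0 where x0: "real (card {f \<in> tup k A. sg k f \<in> Q''}) \<le> N^(k-1) * real (card {a\<in>A. x0 + a \<in> Q''})"
      using pigeon[OF fA Ane k1, of Q''] by (auto simp: N_def)
    define A' where "A' = {a\<in>A. x0 + a \<in> Q''}"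
    have A'A: "A' \<subseteq> A" by (auto simp: A'_def)
    have massA: "(\<Sum>x\<in>Q''. r x) \<le> N^(k-1) * real (card A')"
      using x0 mass_eq[OF fA Q''V[unfolded V_def]] by (simp add: r_def A'_def)
    have big: "real (card A') \<ge> (1/2^40) * N powr (1 - 82 * \<delta>)"
    proof -
      have s0: "(\<Sum>x\<in>Q''. r x) \<ge> 0" using r0 by (simp add: sum_nonneg)
      have "(\<Sum>x\<in>Q''. r x)^2 \<le> (N^(k-1) * real (card A'))^2" using massA s0 by (rule power_mono)
      then have "M^2 / (2^80 * K^21) \<le> (N^(k-1) * real (card A'))^2" using mass by linarith
      moreover have "M^2 = (N^(k-1))^2 * N^2"
      proof -
        have sk1: "Suc (k-1) = k" using k1 by simp
        have "M = N^(Suc (k-1))" by (simp only: M_def sk1)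
        also have "\<dots> = N^(k-1) * N" by (rule power_Suc2)
        finally show ?thesis by (simp add: power_mult_distrib)
      qed
      ultimately have "(N^(k-1))^2 * (N^2 / (2^80 * K^21)) \<le> (N^(k-1))^2 * real (card A')^2"
        by (simp add: power_mult_distrib)
      then have a1: "N^2 / (2^80 * K^21) \<le> real (card A')^2"
        by (rule mult_left_le_imp_le) (use N0 in simp)
      have "K^21 \<le> K^164" using K1 by (intro power_increasing) auto
      then have "N^2 / (2^80 * K^164) \<le> N^2 / (2^80 * K^21)" using K0 by (intro divide_left_mono) auto
      also have "N^2 / (2^80 * K^164) = (N / (2^40 * K^82))^2"
        by (simp add: power_divide power_mult_distrib flip: power_mult)
      finally have "(N / (2^40 * K^82))^2 \<le> real (card A')^2" using a1 by linarith
      then have a2: "N / (2^40 * K^82) \<le> real (card A')" by (rule power2_le_imp_le) simp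
      have "N powr (1 - 82 * \<delta>) = N / K^82"
        using N0 by (simp add: K_def powr_diff powr_power mult.commute)
      then show ?thesis using a2 by simp
    qed
    have sums: "real (card (sumdiff m n A')) \<le> (16 * 2^(311*(m+n))) * N powr (\<nu> + 240 * real (m + n) * \<delta>)" for m n
    proof (cases "m + n = 0")
      case True
      then have "m = 0" "n = 0" by auto
      then have "sumdiff m n A' = {0}" by (simp add: sumdiff_ms)
      moreover have "N powr \<nu> \<ge> 1" using N1 \<nu>1 by (intro ge_one_powr_ge_zero) auto
      ultimately show ?thesis using True by simp
    next
      case False
      define j where "j = m + n"
      have j1: "j \<ge> 1" using False unfolding j_def by linarith
      have hx0: "\<And>a. a \<in> A' \<Longrightarrow> x0 + a \<in> Q''" by (simp add: A'_def)
      have "card (sumdiff m n A') \<le> card (sumdiff m n Q'')"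
        by (rule sumdiff_translate[OF fQ'' hx0])
      then have "real (card (sumdiff m n A')) \<le> real (card (sumdiff m n Q''))" by simp
      also have "\<dots> \<le> (2^311 * K^80)^j * card Q''"
        unfolding j_def by (rule plunnecke[OF fQ'' Q''ne dbl])
      also have "\<dots> \<le> (2^311 * K^80)^j * (16 * K * N powr \<nu>)"
        using cardQ2 K0 by (intro mult_left_mono) auto
      also have "\<dots> = 16 * 2^(311*j) * (K^(80*j+1)) * N powr \<nu>"
      proof -
        have p1: "(2^311 * K^80)^j = (2::real)^(311*j) * K^(80*j)" by (simp only: power_mult_distrib power_mult)
        have p2: "K^(80*j+1) = K^(80*j) * K" by simp
        show ?thesis unfolding p1 p2 by (simp only: mult_ac)
      qed
      also have "\<dots> \<le> 16 * 2^(311*j) * (K^(240*j)) * N powr \<nu>"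
        using K1 j1 by (intro mult_right_mono mult_left_mono power_increasing) auto
      also have "K^(240*j) = N powr (240 * real j * \<delta>)"
        using N0 by (simp add: K_def powr_power mult_ac)
      also have "16 * 2^(311*j) * N powr (240 * real j * \<delta>) * N powr \<nu>
          = 16 * 2^(311*j) * N powr (\<nu> + 240 * real j * \<delta>)"
        by (simp add: powr_add mult_ac)
      finally show ?thesis by (simp add: j_def)
    qed
    show ?thesis using A'A big sums unfolding N_def by blast
  qed
qed

theorem proposition2p3:
  "\<exists>c::real. c > 0 \<and> (\<exists>C :: nat \<Rightarrow> nat \<Rightarrow> real. (\<forall>m n. C m n > 0) \<and>
    (\<forall>(\<nu>::real) (\<delta>::real) (s::nat) (A::real set).
       \<nu> \<ge> 1 \<and> \<delta> > 0 \<and> even s \<and> s \<ge> 4 \<and> finite A \<and> A \<noteq> {} \<and>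
       real (energy s A) \<ge> real (card A) powr (2 * real s - \<nu>)
       \<longrightarrow>
       real (energy (s div 2) A) > real (card A) powr (real s - \<nu> + \<delta>)
       \<or> (\<exists>A' \<subseteq> A. real (card A') \<ge> c * real (card A) powr (1 - 82 * \<delta>) \<and>
             (\<forall>m n. real (card (sumdiff m n A'))
                 \<le> C m n * real (card A) powr (\<nu> + 240 * real (m + n) * \<delta>)))))"
proof (intro exI[of _ "1/2^40"] conjI exI[of _ "\<lambda>m n. 16 * 2^(311*(m+n))"] allI impI)
  show "(0::real) < 1/2^40" by simp
  show "0 < (\<lambda>m n. 16 * (2::real)^(311*(m+n))) m n" for m n by simp
next
  fix \<nu> \<delta> :: real and s :: nat and A :: "real set"
  assume "\<nu> \<ge> 1 \<and> \<delta> > 0 \<and> even s \<and> s \<ge> 4 \<and> finite A \<and> A \<noteq> {} \<and>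
       real (energy s A) \<ge> real (card A) powr (2 * real s - \<nu>)"
  then show "real (energy (s div 2) A) > real (card A) powr (real s - \<nu> + \<delta>)
       \<or> (\<exists>A' \<subseteq> A. real (card A') \<ge> 1/2^40 * real (card A) powr (1 - 82 * \<delta>) \<and>
             (\<forall>m n. real (card (sumdiff m n A'))
                 \<le> (\<lambda>m n. 16 * 2^(311*(m+n))) m n * real (card A) powr (\<nu> + 240 * real (m + n) * \<delta>)))"
    using main_lemma[of \<nu> \<delta> s A] by simp
qed



end
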